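(* Assume $\ell=2$ and the IV model (exclusion, random assignment, consistency). Then for every full data law satisfying these assumptions and inducing an observed law $\mathcal P$, $$\max_{\mathbf v\in\mathcal V}\mathbf v^\top\mathbf p\;\le\;\mathrm{ATE}\;\le\;-\max_{\mathbf v\in\mathcal V}\mathbf v^\top\bar{\mathbf p},$$ and these bounds are sharp: for every observed law $\mathcal P$ induced by some full data law satisfying the assumptions, there exist full data laws satisfying the assumptions and inducing $\mathcal P$ whose ATE equals the lower bound and the upper bound, respectively.
   Context: IV setting: $D\in\{0,1\}$ treatment; $Y$ outcome with values $\gamma_0<\dots<\gamma_{n-1}$; instrument $Z\in\{0,1\}$; $[n]=\{0,\dots,n-1\}$. Potential outcomes $Y^{(d,z)}$, potential treatments $D^{(z)}$. Assumptions: (Exclusion) $Y^{(d,0)}=Y^{(d,1)}$ a.s., written $Y^{(d)}$; (Random assignment) $Z\perp(Y^{(0)},Y^{(1)},D^{(0)},D^{(1)})$; (Consistency) $Y=(1-D)Y^{(0)}+DY^{(1)}$, $D=\mathbb 1(Z=0)D^{(0)}+\mathbb 1(Z=1)D^{(1)}$. A full data law is a joint law of $(Y^{(0)},Y^{(1)},D^{(0)},D^{(1)},Z)$; it induces the observed law $\mathcal P$ of $(Y,D,Z)$, assumed to have $\mathcal P(Z=z)>0$. $\mathrm{ATE}=\mathbb E[Y^{(1)}-Y^{(0)}]$. Vectors $\mathbf p,\bar{\mathbf p}\in\mathbb R^{4n}$ have entries $p_{ydz}=\mathcal P(Y=\gamma_y,D=d\mid Z=z)$ and $\bar p_{ydz}=p_{y(1-d)z}$;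 $\mathbf v^\top\mathbf p=\sum_{y,d,z}v_{ydz}p_{ydz}$. The set $\mathcal V=\{\mathbf u(\mathbf B):\mathbf B\in S\}\subset\mathbb R^{4n}$ is defined as follows. $S=S_1\cup S_2\cup S_3\subseteq\{0,1\}^{n\times2\times2}$: $\mathbf B\in S_1$ iff some $t\in\{0,\dots,n-2\}$ has $B_{i00}=B_{i01}=1$ for $i\ge t$ and $B_{i00}\ne B_{i01}$ for $i<t$, $B_{i10}\ne B_{i11}$ for all $i$, and some $i,j$ have $B_{i10}=B_{j11}=1$; $\mathbf B\in S_2$ iff $B_{(n-1)00}=B_{(n-1)01}=B_{010}=B_{011}=1$, $B_{i00}\ne B_{i01}$ for $i<n-1$, $B_{j10}\ne B_{j11}$ for $j>0$; $\mathbf B\in S_3$ iff some $t\in\{1,\dots,n-1\}$ has $B_{i10}=B_{i11}=1$ for $i\le t$ and $B_{i10}\ne B_{i11}$ for $i>t$, $B_{i00}\ne B_{i01}$ for all $i$, and some $i,j$ have $B_{i00}=B_{j01}=1$. Set $\alpha=-\gamma_0-\gamma_t$ on $S_1$, $\alpha=-\gamma_0-\gamma_{n-1}$ on $S_2$, $\alpha=-\gamma_t-\gamma_{n-1}$ on $S_3$, and: $u_{i00}=-\gamma_i-\alpha$ if $B_{i00}=1$ else $\gamma_0$; $u_{i10}=\gamma_i$ if $B_{i10}=1$ else $-\gamma_{n-1}-\alpha$; $u_{i01}=-\gamma_i$ if $B_{i01}=1$ else $\gamma_0+\alpha$; $u_{i11}=\gamma_i+\alpha$ if $B_{i11}=1$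 else $-\gamma_{n-1}$. *)

theory Defs
  imports Main "HOL.Real"
begin

text \<open>Outcome values are gamma 0 < ... < gamma (n-1); outcomes are represented
by their indices in {..<n}. Treatment and instrument values are 0/1, encoded as nat < 2.
A full data law (exclusion already built in, as in the paper) is a probability mass
function q a b c d z = P(Y0 = gamma a, Y1 = gamma b, D0 = c, D1 = d, Z = z).\<close>

definition full_law :: "nat \<Rightarrow> (nat \<Rightarrow> nat \<Rightarrow> nat \<Rightarrow> nat \<Rightarrow> nat \<Rightarrow> real) \<Rightarrow> bool" where
  "full_law n q \<longleftrightarrow>
     (\<forall>a b c d z. 0 \<le> q a b c d z) \<and>
     (\<forall>a b c d z. \<not> (a < n \<and> b < n \<and> c < 2 \<and> d < 2 \<and> z < 2) \<longrightarrow> q a b c d z = 0) \<and>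
     (\<Sum>a<n. \<Sum>b<n. \<Sum>c<2. \<Sum>d<2. \<Sum>z<2. q a b c d z) = 1"

definition pZ :: "nat \<Rightarrow> (nat \<Rightarrow> nat \<Rightarrow> nat \<Rightarrow> nat \<Rightarrow> nat \<Rightarrow> real) \<Rightarrow> nat \<Rightarrow> real" where
  "pZ n q z = (\<Sum>a<n. \<Sum>b<n. \<Sum>c<2. \<Sum>d<2. q a b c d z)"

definition rand_assign :: "nat \<Rightarrow> (nat \<Rightarrow> nat \<Rightarrow> nat \<Rightarrow> nat \<Rightarrow> nat \<Rightarrow> real) \<Rightarrow> bool" where
  "rand_assign n q \<longleftrightarrow>
     (\<forall>a b c d z. q a b c d z = (\<Sum>z'<2. q a b c d z') * pZ n q z)"

definition IV_law :: "nat \<Rightarrow> (nat \<Rightarrow> nat \<Rightarrow> nat \<Rightarrow> nat \<Rightarrow> nat \<Rightarrow> real) \<Rightarrow> bool" where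
  "IV_law n q \<longleftrightarrow> full_law n q \<and> rand_assign n q"

definition obs :: "nat \<Rightarrow> (nat \<Rightarrow> nat \<Rightarrow> nat \<Rightarrow> nat \<Rightarrow> nat \<Rightarrow> real) \<Rightarrow> nat \<Rightarrow> nat \<Rightarrow> nat \<Rightarrow> real" where
  "obs n q y dd z = (\<Sum>a<n. \<Sum>b<n. \<Sum>c<2. \<Sum>d<2.
      (if (if z = 0 then c else d) = dd \<and> (if dd = 0 then a else b) = y then q a b c d z else 0))"

definition pvec :: "nat \<Rightarrow> (nat \<Rightarrow> nat \<Rightarrow> nat \<Rightarrow> nat \<Rightarrow> nat \<Rightarrow> real) \<Rightarrow> nat \<Rightarrow> nat \<Rightarrow> nat \<Rightarrow> real" where
  "pvec n q y d z = obs n q y d z / pZ n q z"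

definition pbar :: "nat \<Rightarrow> (nat \<Rightarrow> nat \<Rightarrow> nat \<Rightarrow> nat \<Rightarrow> nat \<Rightarrow> real) \<Rightarrow> nat \<Rightarrow> nat \<Rightarrow> nat \<Rightarrow> real" where
  "pbar n q y d z = pvec n q y (1 - d) z"

definition ATE :: "nat \<Rightarrow> (nat \<Rightarrow> real) \<Rightarrow> (nat \<Rightarrow> nat \<Rightarrow> nat \<Rightarrow> nat \<Rightarrow> nat \<Rightarrow> real) \<Rightarrow> real" where
  "ATE n \<gamma> q = (\<Sum>a<n. \<Sum>b<n. \<Sum>c<2. \<Sum>d<2. \<Sum>z<2. q a b c d z * (\<gamma> b - \<gamma> a))"

definition ip :: "nat \<Rightarrow> (nat \<Rightarrow> nat \<Rightarrow> nat \<Rightarrow> real) \<Rightarrow> (nat \<Rightarrow> nat \<Rightarrow> nat \<Rightarrow> real) \<Rightarrow> real" where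
  "ip n v p = (\<Sum>y<n. \<Sum>d<2. \<Sum>z<2. v y d z * p y d z)"

text \<open>The sets S1, S2, S3 (B y d z stands for B_{ydz} in {0,1}).\<close>
definition S1 :: "nat \<Rightarrow> (nat \<Rightarrow> nat \<Rightarrow> nat \<Rightarrow> bool) \<Rightarrow> nat \<Rightarrow> bool" where
  "S1 n B t \<longleftrightarrow> t + 2 \<le> n \<and>
     (\<forall>i<n. t \<le> i \<longrightarrow> B i 0 0 \<and> B i 0 1) \<and>
     (\<forall>i<t. B i 0 0 \<noteq> B i 0 1) \<and>
     (\<forall>i<n. B i 1 0 \<noteq> B i 1 1) \<and>
     (\<exists>i<n. \<exists>j<n. B i 1 0 \<and> B j 1 1)"

definition S2 :: "nat \<Rightarrow> (nat \<Rightarrow> nat \<Rightarrow> nat \<Rightarrow> bool) \<Rightarrow> bool" where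
  "S2 n B \<longleftrightarrow> B (n - 1) 0 0 \<and> B (n - 1) 0 1 \<and> B 0 1 0 \<and> B 0 1 1 \<and>
     (\<forall>i. i < n - 1 \<longrightarrow> B i 0 0 \<noteq> B i 0 1) \<and>
     (\<forall>j. 0 < j \<and> j < n \<longrightarrow> B j 1 0 \<noteq> B j 1 1)"

definition S3 :: "nat \<Rightarrow> (nat \<Rightarrow> nat \<Rightarrow> nat \<Rightarrow> bool) \<Rightarrow> nat \<Rightarrow> bool" where
  "S3 n B t \<longleftrightarrow> 1 \<le> t \<and> t \<le> n - 1 \<and>
     (\<forall>i. i \<le> t \<longrightarrow> B i 1 0 \<and> B i 1 1) \<and>
     (\<forall>i. t < i \<and> i < n \<longrightarrow> B i 1 0 \<noteq> B i 1 1) \<and>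
     (\<forall>i<n. B i 0 0 \<noteq> B i 0 1) \<and>
     (\<exists>i<n. \<exists>j<n. B i 0 0 \<and> B j 0 1)"

definition uvec :: "(nat \<Rightarrow> real) \<Rightarrow> nat \<Rightarrow> real \<Rightarrow> (nat \<Rightarrow> nat \<Rightarrow> nat \<Rightarrow> bool) \<Rightarrow> nat \<Rightarrow> nat \<Rightarrow> nat \<Rightarrow> real" where
  "uvec \<gamma> n \<alpha> B i d z =
     (if \<not> i < n then 0
      else if d = 0 \<and> z = 0 then (if B i 0 0 then - \<gamma> i - \<alpha> else \<gamma> 0)
      else if d = 1 \<and> z = 0 then (if B i 1 0 then \<gamma> i else - \<gamma> (n - 1) - \<alpha>)
      else if d = 0 \<and> z = 1 then (if B i 0 1 then - \<gamma> i else \<gamma> 0 + \<alpha>)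
      else if d = 1 \<and> z = 1 then (if B i 1 1 then \<gamma> i + \<alpha> else - \<gamma> (n - 1))
      else 0)"

definition Vset :: "(nat \<Rightarrow> real) \<Rightarrow> nat \<Rightarrow> (nat \<Rightarrow> nat \<Rightarrow> nat \<Rightarrow> real) set" where
  "Vset \<gamma> n =
     {uvec \<gamma> n (- \<gamma> 0 - \<gamma> t) B | B t. S1 n B t} \<union>
     {uvec \<gamma> n (- \<gamma> 0 - \<gamma> (n - 1)) B | B. S2 n B} \<union>
     {uvec \<gamma> n (- \<gamma> t - \<gamma> (n - 1)) B | B t. S3 n B t}"

definition lower_bd :: "(nat \<Rightarrow> real) \<Rightarrow> nat \<Rightarrow> (nat \<Rightarrow> nat \<Rightarrow> nat \<Rightarrow> nat \<Rightarrow> nat \<Rightarrow> real) \<Rightarrow> real" where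
  "lower_bd \<gamma> n q = Max ((\<lambda>v. ip n v (pvec n q)) ` Vset \<gamma> n)"

definition upper_bd :: "(nat \<Rightarrow> real) \<Rightarrow> nat \<Rightarrow> (nat \<Rightarrow> nat \<Rightarrow> nat \<Rightarrow> nat \<Rightarrow> nat \<Rightarrow> real) \<Rightarrow> real" where
  "upper_bd \<gamma> n q = - Max ((\<lambda>v. ip n v (pbar n q)) ` Vset \<gamma> n)"

end

theory Submission
  imports Defs
begin

lemma sum2: "(\<Sum>i<(2::nat). f i) = f 0 + f 1"
  by (simp add: numeral_2_eq_2)
lemma dl: "(\<Sum>a<(n::nat). if a = y then K a else 0) = (if y<n then K y else (0::real))"
  by (induct n) auto
lemma dsumA: "(\<Sum>a<(n::nat). \<Sum>b<n. (if a = y then f a b else 0) + (if a = y then g a b else 0)) = (if y < n then (\<Sum>b<n. f y b + g y b) else (0::real))"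
proof -
  have "(\<Sum>a<n. \<Sum>b<n. (if a = y then f a b else 0) + (if a = y then g a b else 0)) = (\<Sum>a<n. if a = y then (\<Sum>b<n. f a b + g a b) else 0)"
    by (rule sum.cong) auto
  also have "\<dots> = (if y < n then (\<Sum>b<n. f y b + g y b) else 0)" by (rule dl)
  finally show ?thesis .
qed
lemma dsumB: "(\<Sum>a<(n::nat). \<Sum>b<n. (if b = y then f a b else 0) + (if b = y then g a b else 0)) = (if y < n then (\<Sum>a<n. f a y + g a y) else (0::real))"
proof -
  have "(\<Sum>a<n. \<Sum>b<n. (if b = y then f a b else 0) + (if b = y then g a b else 0)) = (\<Sum>a<n. if y < n then f a y + g a y else 0)"
    by (rule sum.cong) (auto simp: dl sum.distrib)
  also have "\<dots> = (if y < n then (\<Sum>a<n. f a y + g a y) else 0)" by simp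
  finally show ?thesis .
qed

lemma obs00: "obs n q y 0 0 = (if y < n then (\<Sum>b<n. q y b 0 0 0 + q y b 0 1 0) else 0)"
  unfolding obs_def sum2 by (simp add: dsumA)
lemma obs10: "obs n q y 1 0 = (if y < n then (\<Sum>a<n. q a y 1 0 0 + q a y 1 1 0) else 0)"
  unfolding obs_def sum2 by (simp add: dsumB)
lemma obs01: "obs n q y 0 1 = (if y < n then (\<Sum>b<n. q y b 0 0 1 + q y b 1 0 1) else 0)"
  unfolding obs_def sum2 by (simp add: dsumA)
lemma obs11: "obs n q y 1 1 = (if y < n then (\<Sum>a<n. q a y 0 1 1 + q a y 1 1 1) else 0)"
  unfolding obs_def sum2 by (simp add: dsumB)
lemma obs2: "2 \<le> dd \<Longrightarrow> obs n q y dd z = 0"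
  unfolding obs_def sum2 by simp

lemma obs_z: assumes "\<And>a b c d. q a b c d z = 0" shows "obs n q y dd z = 0"
  unfolding obs_def by (intro sum.neutral ballI) (simp add: assms)

definition pii :: "(nat \<Rightarrow> nat \<Rightarrow> nat \<Rightarrow> nat \<Rightarrow> nat \<Rightarrow> real) \<Rightarrow> nat \<Rightarrow> nat \<Rightarrow> nat \<Rightarrow> nat \<Rightarrow> real" where
  "pii q a b c d = (\<Sum>z<2. q a b c d z)"

definition mA :: "nat \<Rightarrow> (nat \<Rightarrow> nat \<Rightarrow> nat \<Rightarrow> nat \<Rightarrow> real) \<Rightarrow> nat \<Rightarrow> real" where
  "mA n p y = (\<Sum>b<n. p y b 0 0 + p y b 0 1)"
definition mB :: "nat \<Rightarrow> (nat \<Rightarrow> nat \<Rightarrow> nat \<Rightarrow> nat \<Rightarrow> real) \<Rightarrow> nat \<Rightarrow> real" where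
  "mB n p y = (\<Sum>a<n. p a y 1 0 + p a y 1 1)"
definition mC :: "nat \<Rightarrow> (nat \<Rightarrow> nat \<Rightarrow> nat \<Rightarrow> nat \<Rightarrow> real) \<Rightarrow> nat \<Rightarrow> real" where
  "mC n p y = (\<Sum>b<n. p y b 0 0 + p y b 1 0)"
definition mE :: "nat \<Rightarrow> (nat \<Rightarrow> nat \<Rightarrow> nat \<Rightarrow> nat \<Rightarrow> real) \<Rightarrow> nat \<Rightarrow> real" where
  "mE n p y = (\<Sum>a<n. p a y 0 1 + p a y 1 1)"

lemma obs_fact:
  assumes "\<And>a b c d z. q a b c d z = p a b c d * w z"
  shows "obs n q y 0 0 = (if y < n then w 0 * mA n p y else 0)"
    "obs n q y 1 0 = (if y < n then w 0 * mB n p y else 0)"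
    "obs n q y 0 1 = (if y < n then w 1 * mC n p y else 0)"
    "obs n q y 1 1 = (if y < n then w 1 * mE n p y else 0)"
  unfolding obs00 obs10 obs01 obs11 mA_def mB_def mC_def mE_def assms
  by (simp_all add: sum_distrib_left algebra_simps)

lemma IV_fact: "IV_law n q \<Longrightarrow> q a b c d z = pii q a b c d * pZ n q z"
  unfolding IV_law_def rand_assign_def pii_def by blast

lemma IV_nonneg: "IV_law n q \<Longrightarrow> 0 \<le> q a b c d z"
  unfolding IV_law_def full_law_def by blast
lemma IV_zero: "IV_law n q \<Longrightarrow> \<not> (a < n \<and> b < n \<and> c < 2 \<and> d < 2 \<and> z < 2) \<Longrightarrow> q a b c d z = 0"
  unfolding IV_law_def full_law_def by blast
lemma IV_sum: "IV_law n q \<Longrightarrow> (\<Sum>a<n. \<Sum>b<n. \<Sum>c<2. \<Sum>d<2. \<Sum>z<2. q a b c d z) = 1"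
  unfolding IV_law_def full_law_def by blast

lemma pii_nonneg: "IV_law n q \<Longrightarrow> 0 \<le> pii q a b c d"
  unfolding pii_def by (simp add: sum_nonneg IV_nonneg)

lemma pZ_sum: "IV_law n q \<Longrightarrow> pZ n q 0 + pZ n q 1 = 1"
proof -
  assume h: "IV_law n q"
  have "pZ n q 0 + pZ n q 1 = (\<Sum>a<n. \<Sum>b<n. \<Sum>c<2. \<Sum>d<2. \<Sum>z<2. q a b c d z)"
    unfolding pZ_def sum2 by (simp add: sum.distrib[symmetric] algebra_simps)
  then show ?thesis using IV_sum[OF h] by simp
qed

lemma pvec_m:
  assumes "IV_law n q" "\<forall>z<2. 0 < pZ n q z" "y < n"
  shows "pvec n q y 0 0 = mA n (pii q) y" "pvec n q y 1 0 = mB n (pii q) y"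
    "pvec n q y 0 1 = mC n (pii q) y" "pvec n q y 1 1 = mE n (pii q) y"
proof -
  have f: "\<And>a b c d z. q a b c d z = pii q a b c d * pZ n q z" using IV_fact[OF assms(1)] .
  have p0: "pZ n q 0 \<noteq> 0" "pZ n q 1 \<noteq> 0" using assms(2) by (auto dest: spec[of _ 0] spec[of _ 1])
  show "pvec n q y 0 0 = mA n (pii q) y" "pvec n q y 1 0 = mB n (pii q) y"
    "pvec n q y 0 1 = mC n (pii q) y" "pvec n q y 1 1 = mE n (pii q) y"
    unfolding pvec_def obs_fact[OF f] using assms(3) p0 by auto
qed

definition ipm :: "nat \<Rightarrow> (nat \<Rightarrow> nat \<Rightarrow> nat \<Rightarrow> real) \<Rightarrow> (nat \<Rightarrow> nat \<Rightarrow> nat \<Rightarrow> nat \<Rightarrow> real) \<Rightarrow> real" where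
  "ipm n v p = (\<Sum>y<n. v y 0 0 * mA n p y + v y 1 0 * mB n p y + v y 0 1 * mC n p y + v y 1 1 * mE n p y)"

lemma ip_pvec:
  assumes "IV_law n q" "\<forall>z<2. 0 < pZ n q z"
  shows "ip n v (pvec n q) = ipm n v (pii q)"
  unfolding ip_def ipm_def sum2 using pvec_m[OF assms]
  by (intro sum.cong) (auto simp: algebra_simps)

lemma ipm_types: "ipm n v p = (\<Sum>a<n. \<Sum>b<n. p a b 0 0 * (v a 0 0 + v a 0 1) + p a b 0 1 * (v a 0 0 + v b 1 1)
    + p a b 1 0 * (v b 1 0 + v a 0 1) + p a b 1 1 * (v b 1 0 + v b 1 1))"
proof -
  have e1: "(\<Sum>y<n. v y 0 0 * mA n p y) = (\<Sum>a<n. \<Sum>b<n. p a b 0 0 * v a 0 0 + p a b 0 1 * v a 0 0)"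
    unfolding mA_def by (simp add: sum_distrib_left algebra_simps)
  have e2: "(\<Sum>y<n. v y 0 1 * mC n p y) = (\<Sum>a<n. \<Sum>b<n. p a b 0 0 * v a 0 1 + p a b 1 0 * v a 0 1)"
    unfolding mC_def by (simp add: sum_distrib_left algebra_simps)
  have e3: "(\<Sum>y<n. v y 1 0 * mB n p y) = (\<Sum>a<n. \<Sum>b<n. p a b 1 0 * v b 1 0 + p a b 1 1 * v b 1 0)"
    unfolding mB_def sum_distrib_left apply (subst sum.swap) by (simp add: sum.distrib algebra_simps)
  have e4: "(\<Sum>y<n. v y 1 1 * mE n p y) = (\<Sum>a<n. \<Sum>b<n. p a b 0 1 * v b 1 1 + p a b 1 1 * v b 1 1)"
    unfolding mE_def sum_distrib_left apply (subst sum.swap) by (simp add: sum.distrib algebra_simps)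
  have "ipm n v p = (\<Sum>y<n. v y 0 0 * mA n p y) + (\<Sum>y<n. v y 1 0 * mB n p y) + (\<Sum>y<n. v y 0 1 * mC n p y) + (\<Sum>y<n. v y 1 1 * mE n p y)"
    unfolding ipm_def by (simp add: sum.distrib)
  also have "\<dots> = (\<Sum>a<n. \<Sum>b<n. p a b 0 0 * (v a 0 0 + v a 0 1) + p a b 0 1 * (v a 0 0 + v b 1 1)
    + p a b 1 0 * (v b 1 0 + v a 0 1) + p a b 1 1 * (v b 1 0 + v b 1 1))"
    unfolding e1 e2 e3 e4 by (simp add: sum.distrib[symmetric] algebra_simps)
  finally show ?thesis .
qed

definition ATEp :: "nat \<Rightarrow> (nat \<Rightarrow> real) \<Rightarrow> (nat \<Rightarrow> nat \<Rightarrow> nat \<Rightarrow> nat \<Rightarrow> real) \<Rightarrow> real" where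
  "ATEp n \<gamma> p = (\<Sum>a<n. \<Sum>b<n. (p a b 0 0 + p a b 0 1 + p a b 1 0 + p a b 1 1) * (\<gamma> b - \<gamma> a))"

lemma ATE_p: "ATE n \<gamma> q = ATEp n \<gamma> (pii q)"
  unfolding ATE_def ATEp_def pii_def sum2 by (simp add: algebra_simps)



lemma gmono: "strict_mono_on {..<(n::nat)} \<gamma> \<Longrightarrow> (i::nat) \<le> j \<Longrightarrow> j < n \<Longrightarrow> (\<gamma> i :: real) \<le> \<gamma> j"
proof (cases "i = j")
  case False
  assume m: "strict_mono_on {..<n} \<gamma>" "i \<le> j" "j < n"
  then have "\<gamma> i < \<gamma> j" using False by (intro strict_mono_onD[OF m(1)]) auto
  then show ?thesis by simp
qed simp

lemma uv:
  assumes "i < n"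
  shows "uvec \<gamma> n \<alpha> B i 0 0 = (if B i 0 0 then - \<gamma> i - \<alpha> else \<gamma> 0)"
    "uvec \<gamma> n \<alpha> B i 1 0 = (if B i 1 0 then \<gamma> i else - \<gamma> (n - 1) - \<alpha>)"
    "uvec \<gamma> n \<alpha> B i 0 1 = (if B i 0 1 then - \<gamma> i else \<gamma> 0 + \<alpha>)"
    "uvec \<gamma> n \<alpha> B i 1 1 = (if B i 1 1 then \<gamma> i + \<alpha> else - \<gamma> (n - 1))"
  using assms unfolding uvec_def by auto

lemma valid_generic:
  fixes \<gamma> :: "nat \<Rightarrow> real"
  assumes mono: "strict_mono_on {..<n} \<gamma>"
    and H1: "\<forall>a<n. B a 0 0 \<and> B a 0 1 \<longrightarrow> - \<alpha> \<le> \<gamma> 0 + \<gamma> a"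
    and H2: "\<forall>a<n. \<not> (B a 0 0 \<and> B a 0 1) \<longrightarrow> \<alpha> \<le> - \<gamma> 0 - \<gamma> a"
    and H3: "\<forall>b<n. B b 1 0 \<and> B b 1 1 \<longrightarrow> \<alpha> \<le> - \<gamma> b - \<gamma> (n - 1)"
    and H4: "\<forall>b<n. \<not> (B b 1 0 \<and> B b 1 1) \<longrightarrow> - \<alpha> \<le> \<gamma> b + \<gamma> (n - 1)"
    and ab: "a < n" "b < n"
  shows "uvec \<gamma> n \<alpha> B a 0 0 + uvec \<gamma> n \<alpha> B a 0 1 \<le> \<gamma> b - \<gamma> a"
    "uvec \<gamma> n \<alpha> B a 0 0 + uvec \<gamma> n \<alpha> B b 1 1 \<le> \<gamma> b - \<gamma> a"
    "uvec \<gamma> n \<alpha> B b 1 0 + uvec \<gamma> n \<alpha> B a 0 1 \<le> \<gamma> b - \<gamma> a"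
    "uvec \<gamma> n \<alpha> B b 1 0 + uvec \<gamma> n \<alpha> B b 1 1 \<le> \<gamma> b - \<gamma> a"
proof -
  have g0: "\<gamma> 0 \<le> \<gamma> b" using gmono[OF mono, of 0 b] ab by auto
  have g1: "\<gamma> a \<le> \<gamma> (n - 1)" using gmono[OF mono, of a "n - 1"] ab by auto
  have h1: "B a 0 0 \<and> B a 0 1 \<longrightarrow> - \<alpha> \<le> \<gamma> 0 + \<gamma> a" using H1 ab by auto
  have h2: "\<not> (B a 0 0 \<and> B a 0 1) \<longrightarrow> \<alpha> \<le> - \<gamma> 0 - \<gamma> a" using H2 ab by auto
  have h3: "B b 1 0 \<and> B b 1 1 \<longrightarrow> \<alpha> \<le> - \<gamma> b - \<gamma> (n - 1)" using H3 ab by auto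
  have h4: "\<not> (B b 1 0 \<and> B b 1 1) \<longrightarrow> - \<alpha> \<le> \<gamma> b + \<gamma> (n - 1)" using H4 ab by auto
  show "uvec \<gamma> n \<alpha> B a 0 0 + uvec \<gamma> n \<alpha> B a 0 1 \<le> \<gamma> b - \<gamma> a"
    "uvec \<gamma> n \<alpha> B a 0 0 + uvec \<gamma> n \<alpha> B b 1 1 \<le> \<gamma> b - \<gamma> a"
    "uvec \<gamma> n \<alpha> B b 1 0 + uvec \<gamma> n \<alpha> B a 0 1 \<le> \<gamma> b - \<gamma> a"
    "uvec \<gamma> n \<alpha> B b 1 0 + uvec \<gamma> n \<alpha> B b 1 1 \<le> \<gamma> b - \<gamma> a"
    unfolding uv[OF ab(1)] uv[OF ab(2)] using g0 g1 h1 h2 h3 h4 by (auto split: if_splits)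
qed

lemma S1_H:
  fixes \<gamma> :: "nat \<Rightarrow> real"
  assumes mono: "strict_mono_on {..<n} \<gamma>" and S: "S1 n B t" and al: "\<alpha> = - \<gamma> 0 - \<gamma> t"
  shows "\<forall>a<n. B a 0 0 \<and> B a 0 1 \<longrightarrow> - \<alpha> \<le> \<gamma> 0 + \<gamma> a"
    "\<forall>a<n. \<not> (B a 0 0 \<and> B a 0 1) \<longrightarrow> \<alpha> \<le> - \<gamma> 0 - \<gamma> a"
    "\<forall>b<n. B b 1 0 \<and> B b 1 1 \<longrightarrow> \<alpha> \<le> - \<gamma> b - \<gamma> (n - 1)"
    "\<forall>b<n. \<not> (B b 1 0 \<and> B b 1 1) \<longrightarrow> - \<alpha> \<le> \<gamma> b + \<gamma> (n - 1)"
proof -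
  note gm = gmono[OF mono]
  show "\<forall>a<n. B a 0 0 \<and> B a 0 1 \<longrightarrow> - \<alpha> \<le> \<gamma> 0 + \<gamma> a"
  proof (intro allI impI)
    fix a assume a: "a < n" "B a 0 0 \<and> B a 0 1"
    then have "t \<le> a" using S unfolding S1_def by (metis not_le)
    then show "- \<alpha> \<le> \<gamma> 0 + \<gamma> a" using gm[of t a] a al by auto
  qed
  show "\<forall>a<n. \<not> (B a 0 0 \<and> B a 0 1) \<longrightarrow> \<alpha> \<le> - \<gamma> 0 - \<gamma> a"
  proof (intro allI impI)
    fix a assume a: "a < n" "\<not> (B a 0 0 \<and> B a 0 1)"
    then have "a < t" using S unfolding S1_def by (metis not_le)
    then show "\<alpha> \<le> - \<gamma> 0 - \<gamma> a" using gm[of a t] S al unfolding S1_def by auto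
  qed
  show "\<forall>b<n. B b 1 0 \<and> B b 1 1 \<longrightarrow> \<alpha> \<le> - \<gamma> b - \<gamma> (n - 1)"
    using S unfolding S1_def by auto
  show "\<forall>b<n. \<not> (B b 1 0 \<and> B b 1 1) \<longrightarrow> - \<alpha> \<le> \<gamma> b + \<gamma> (n - 1)"
  proof (intro allI impI)
    fix b assume b: "b < n"
    have "\<gamma> 0 \<le> \<gamma> b" using gm[of 0 b] b by auto
    moreover have "\<gamma> t \<le> \<gamma> (n - 1)" using gm[of t "n - 1"] S b unfolding S1_def by auto
    ultimately show "- \<alpha> \<le> \<gamma> b + \<gamma> (n - 1)" using al by auto
  qed
qed

lemma S2_H:
  fixes \<gamma> :: "nat \<Rightarrow> real"
  assumes mono: "strict_mono_on {..<n} \<gamma>" and S: "S2 n B" and al: "\<alpha> = - \<gamma> 0 - \<gamma> (n - 1)"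
  shows "\<forall>a<n. B a 0 0 \<and> B a 0 1 \<longrightarrow> - \<alpha> \<le> \<gamma> 0 + \<gamma> a"
    "\<forall>a<n. \<not> (B a 0 0 \<and> B a 0 1) \<longrightarrow> \<alpha> \<le> - \<gamma> 0 - \<gamma> a"
    "\<forall>b<n. B b 1 0 \<and> B b 1 1 \<longrightarrow> \<alpha> \<le> - \<gamma> b - \<gamma> (n - 1)"
    "\<forall>b<n. \<not> (B b 1 0 \<and> B b 1 1) \<longrightarrow> - \<alpha> \<le> \<gamma> b + \<gamma> (n - 1)"
proof -
  note gm = gmono[OF mono]
  show "\<forall>a<n. B a 0 0 \<and> B a 0 1 \<longrightarrow> - \<alpha> \<le> \<gamma> 0 + \<gamma> a"
  proof (intro allI impI)
    fix a assume a: "a < n" "B a 0 0 \<and> B a 0 1"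
    then have "a = n - 1" using S unfolding S2_def by (metis Suc_pred' less_Suc_eq not_less0 zero_less_Suc)
    then show "- \<alpha> \<le> \<gamma> 0 + \<gamma> a" using al by auto
  qed
  show "\<forall>a<n. \<not> (B a 0 0 \<and> B a 0 1) \<longrightarrow> \<alpha> \<le> - \<gamma> 0 - \<gamma> a"
    using gm al by auto
  show "\<forall>b<n. B b 1 0 \<and> B b 1 1 \<longrightarrow> \<alpha> \<le> - \<gamma> b - \<gamma> (n - 1)"
  proof (intro allI impI)
    fix b assume b: "b < n" "B b 1 0 \<and> B b 1 1"
    then have "b = 0" using S unfolding S2_def by auto
    then show "\<alpha> \<le> - \<gamma> b - \<gamma> (n - 1)" using al by auto
  qed
  show "\<forall>b<n. \<not> (B b 1 0 \<and> B b 1 1) \<longrightarrow> - \<alpha> \<le> \<gamma> b + \<gamma> (n - 1)"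
    using gm[of 0] al by auto
qed

lemma S3_H:
  fixes \<gamma> :: "nat \<Rightarrow> real"
  assumes mono: "strict_mono_on {..<n} \<gamma>" and S: "S3 n B t" and al: "\<alpha> = - \<gamma> t - \<gamma> (n - 1)"
  shows "\<forall>a<n. B a 0 0 \<and> B a 0 1 \<longrightarrow> - \<alpha> \<le> \<gamma> 0 + \<gamma> a"
    "\<forall>a<n. \<not> (B a 0 0 \<and> B a 0 1) \<longrightarrow> \<alpha> \<le> - \<gamma> 0 - \<gamma> a"
    "\<forall>b<n. B b 1 0 \<and> B b 1 1 \<longrightarrow> \<alpha> \<le> - \<gamma> b - \<gamma> (n - 1)"
    "\<forall>b<n. \<not> (B b 1 0 \<and> B b 1 1) \<longrightarrow> - \<alpha> \<le> \<gamma> b + \<gamma> (n - 1)"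
proof -
  note gm = gmono[OF mono]
  have tn: "t < n" using S unfolding S3_def by auto
  show "\<forall>a<n. B a 0 0 \<and> B a 0 1 \<longrightarrow> - \<alpha> \<le> \<gamma> 0 + \<gamma> a"
    using S unfolding S3_def by auto
  show "\<forall>a<n. \<not> (B a 0 0 \<and> B a 0 1) \<longrightarrow> \<alpha> \<le> - \<gamma> 0 - \<gamma> a"
  proof (intro allI impI)
    fix a assume a: "a < n"
    have "\<gamma> 0 \<le> \<gamma> t" using gm[of 0 t] tn by auto
    moreover have "\<gamma> a \<le> \<gamma> (n - 1)" using gm[of a "n - 1"] a by auto
    ultimately show "\<alpha> \<le> - \<gamma> 0 - \<gamma> a" using al by auto
  qed
  show "\<forall>b<n. B b 1 0 \<and> B b 1 1 \<longrightarrow> \<alpha> \<le> - \<gamma> b - \<gamma> (n - 1)"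
  proof (intro allI impI)
    fix b assume b: "b < n" "B b 1 0 \<and> B b 1 1"
    then have "b \<le> t" using S unfolding S3_def by (metis not_le)
    then show "\<alpha> \<le> - \<gamma> b - \<gamma> (n - 1)" using gm[of b t] tn al by auto
  qed
  show "\<forall>b<n. \<not> (B b 1 0 \<and> B b 1 1) \<longrightarrow> - \<alpha> \<le> \<gamma> b + \<gamma> (n - 1)"
  proof (intro allI impI)
    fix b assume b: "b < n" "\<not> (B b 1 0 \<and> B b 1 1)"
    then have "t < b" using S unfolding S3_def by (metis not_le)
    then show "- \<alpha> \<le> \<gamma> b + \<gamma> (n - 1)" using gm[of t b] b al by auto
  qed
qed

lemma Vset_valid:
  fixes \<gamma> :: "nat \<Rightarrow> real"
  assumes mono: "strict_mono_on {..<n} \<gamma>" and v: "v \<in> Vset \<gamma> n" and ab: "a < n" "b < n"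
  shows "v a 0 0 + v a 0 1 \<le> \<gamma> b - \<gamma> a \<and>
    v a 0 0 + v b 1 1 \<le> \<gamma> b - \<gamma> a \<and>
    v b 1 0 + v a 0 1 \<le> \<gamma> b - \<gamma> a \<and>
    v b 1 0 + v b 1 1 \<le> \<gamma> b - \<gamma> a"
proof -
  from v consider (s1) B t where "S1 n B t" "v = uvec \<gamma> n (- \<gamma> 0 - \<gamma> t) B"
    | (s2) B where "S2 n B" "v = uvec \<gamma> n (- \<gamma> 0 - \<gamma> (n - 1)) B"
    | (s3) B t where "S3 n B t" "v = uvec \<gamma> n (- \<gamma> t - \<gamma> (n - 1)) B"
    unfolding Vset_def by blast
  then show ?thesis
  proof cases
    case s1 show ?thesis
      unfolding s1(2) using valid_generic[OF mono S1_H[OF mono s1(1) refl] ab] by auto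
  next
    case s2 show ?thesis
      unfolding s2(2) using valid_generic[OF mono S2_H[OF mono s2(1) refl] ab] by auto
  next
    case s3 show ?thesis
      unfolding s3(2) using valid_generic[OF mono S3_H[OF mono s3(1) refl] ab] by auto
  qed
qed

lemma ipm_valid:
  fixes \<gamma> :: "nat \<Rightarrow> real"
  assumes mono: "strict_mono_on {..<n} \<gamma>" and v: "v \<in> Vset \<gamma> n"
    and nn: "\<And>a b c d. 0 \<le> p a b c d"
  shows "ipm n v p \<le> ATEp n \<gamma> p"
proof -
  have key: "p a b 0 0 * (v a 0 0 + v a 0 1) + p a b 0 1 * (v a 0 0 + v b 1 1) +
           p a b 1 0 * (v b 1 0 + v a 0 1) + p a b 1 1 * (v b 1 0 + v b 1 1)
           \<le> (p a b 0 0 + p a b 0 1 + p a b 1 0 + p a b 1 1) * (\<gamma> b - \<gamma> a)"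
    if a: "a \<in> {..<n}" and b: "b \<in> {..<n}" for a b
  proof -
  note V = Vset_valid[OF mono v, of a b]
  have "p a b 0 0 * (v a 0 0 + v a 0 1) \<le> p a b 0 0 * (\<gamma> b - \<gamma> a)"
    using V a b nn by (intro mult_left_mono) auto
  moreover have "p a b 0 1 * (v a 0 0 + v b 1 1) \<le> p a b 0 1 * (\<gamma> b - \<gamma> a)"
    using V a b nn by (intro mult_left_mono) auto
  moreover have "p a b 1 0 * (v b 1 0 + v a 0 1) \<le> p a b 1 0 * (\<gamma> b - \<gamma> a)"
    using V a b nn by (intro mult_left_mono) auto
  moreover have "p a b 1 1 * (v b 1 0 + v b 1 1) \<le> p a b 1 1 * (\<gamma> b - \<gamma> a)"
    using V a b nn by (intro mult_left_mono) auto
  ultimately show "p a b 0 0 * (v a 0 0 + v a 0 1) + p a b 0 1 * (v a 0 0 + v b 1 1) +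
           p a b 1 0 * (v b 1 0 + v a 0 1) + p a b 1 1 * (v b 1 0 + v b 1 1)
           \<le> (p a b 0 0 + p a b 0 1 + p a b 1 0 + p a b 1 1) * (\<gamma> b - \<gamma> a)"
    by (simp add: algebra_simps)
  qed
  show ?thesis unfolding ipm_types ATEp_def by (intro sum_mono key)
qed

lemma finite_RB: "finite {B :: nat \<Rightarrow> nat \<Rightarrow> nat \<Rightarrow> bool. \<forall>i d z. B i d z \<longrightarrow> i < n \<and> d < 2 \<and> z < 2}"
  (is "finite ?R")
proof -
  let ?F = "\<lambda>B::nat \<Rightarrow> nat \<Rightarrow> nat \<Rightarrow> bool. {(i, d, z). B i d z}"
  have inj: "inj_on ?F ?R"
  proof (rule inj_onI)
    fix B B' assume "?F B = ?F B'"
    then have "\<And>i d z. B i d z = B' i d z" by (metis (mono_tags) case_prod_conv mem_Collect_eq)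
    then show "B = B'" by blast
  qed
  have "?F ` ?R \<subseteq> Pow ({..<n} \<times> {..<2} \<times> {..<2})" by auto
  then have "finite (?F ` ?R)" by (rule finite_subset) auto
  then show ?thesis using finite_imageD inj by blast
qed

definition rB :: "nat \<Rightarrow> (nat \<Rightarrow> nat \<Rightarrow> nat \<Rightarrow> bool) \<Rightarrow> nat \<Rightarrow> nat \<Rightarrow> nat \<Rightarrow> bool" where
  "rB n B i d z = (i < n \<and> d < 2 \<and> z < 2 \<and> B i d z)"

lemma uvec_rB: "uvec \<gamma> n \<alpha> B = uvec \<gamma> n \<alpha> (rB n B)"
  by (intro ext) (simp add: uvec_def rB_def)

lemma finite_Vset: "finite (Vset \<gamma> n)"
proof -
  let ?R = "{B :: nat \<Rightarrow> nat \<Rightarrow> nat \<Rightarrow> bool. \<forall>i d z. B i d z \<longrightarrow> i < n \<and> d < 2 \<and> z < 2}"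
  let ?Al = "((\<lambda>t. - \<gamma> 0 - \<gamma> t) ` UNIV) \<union> ((\<lambda>t. - \<gamma> t - \<gamma> (n - 1)) ` UNIV)"
  have "Vset \<gamma> n \<subseteq> (\<lambda>(\<alpha>, B). uvec \<gamma> n \<alpha> B) ` (((\<lambda>t. - \<gamma> 0 - \<gamma> t) ` {..<n} \<union> (\<lambda>t. - \<gamma> t - \<gamma> (n - 1)) ` {..<n} \<union> {- \<gamma> 0 - \<gamma> (n - 1)}) \<times> ?R)"
  proof
    fix v assume v: "v \<in> Vset \<gamma> n"
    have rb: "rB n B \<in> ?R" for B unfolding rB_def by auto
    from v consider (s1) B t where "S1 n B t" "v = uvec \<gamma> n (- \<gamma> 0 - \<gamma> t) B"
      | (s2) B where "S2 n B" "v = uvec \<gamma> n (- \<gamma> 0 - \<gamma> (n - 1)) B"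
      | (s3) B t where "S3 n B t" "v = uvec \<gamma> n (- \<gamma> t - \<gamma> (n - 1)) B"
      unfolding Vset_def by blast
    then show "v \<in> (\<lambda>(\<alpha>, B). uvec \<gamma> n \<alpha> B) ` (((\<lambda>t. - \<gamma> 0 - \<gamma> t) ` {..<n} \<union> (\<lambda>t. - \<gamma> t - \<gamma> (n - 1)) ` {..<n} \<union> {- \<gamma> 0 - \<gamma> (n - 1)}) \<times> ?R)"
    proof cases
      case s1
      then have "t < n" unfolding S1_def by auto
      then show ?thesis using s1 rb uvec_rB by (intro image_eqI[of _ _ "(- \<gamma> 0 - \<gamma> t, rB n B)"]) auto
    next
      case s2
      then show ?thesis using s2 rb uvec_rB by (intro image_eqI[of _ _ "(- \<gamma> 0 - \<gamma> (n - 1), rB n B)"]) auto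
    next
      case s3
      then have "t < n" unfolding S3_def by auto
      then show ?thesis using s3 rb uvec_rB by (intro image_eqI[of _ _ "(- \<gamma> t - \<gamma> (n - 1), rB n B)"]) auto
    qed
  qed
  moreover have "finite (((\<lambda>t. - \<gamma> 0 - \<gamma> t) ` {..<n} \<union> (\<lambda>t. - \<gamma> t - \<gamma> (n - 1)) ` {..<n} \<union> {- \<gamma> 0 - \<gamma> (n - 1)}) \<times> ?R)"
    using finite_RB by auto
  ultimately show ?thesis by (meson finite_imageI finite_subset)
qed

lemma Vset_ne: "0 < n \<Longrightarrow> Vset \<gamma> n \<noteq> {}"
proof -
  assume n: "0 < n"
  let ?B = "\<lambda>i d z::nat. if d = 0 then (z = 0 \<or> i = n - 1) else (z = 0 \<or> i = 0)"
  have "S2 n ?B" unfolding S2_def using n by auto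
  then show ?thesis unfolding Vset_def by blast
qed




lemma IV_npos: "IV_law n q \<Longrightarrow> 0 < n"
  using IV_sum[of n q] by (cases n) auto

lemma lower_le:
  fixes \<gamma> :: "nat \<Rightarrow> real"
  assumes mono: "strict_mono_on {..<n} \<gamma>" and q: "IV_law n q" and pz: "\<forall>z<2. 0 < pZ n q z"
  shows "lower_bd \<gamma> n q \<le> ATE n \<gamma> q"
proof -
  have "ip n v (pvec n q) \<le> ATE n \<gamma> q" if v: "v \<in> Vset \<gamma> n" for v
  proof -
    have "ip n v (pvec n q) = ipm n v (pii q)" by (rule ip_pvec[OF q pz])
    also have "\<dots> \<le> ATEp n \<gamma> (pii q)" by (rule ipm_valid[OF mono v pii_nonneg[OF q]])
    also have "\<dots> = ATE n \<gamma> q" by (rule ATE_p[symmetric])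
    finally show ?thesis .
  qed
  then show ?thesis unfolding lower_bd_def
    using finite_Vset Vset_ne[OF IV_npos[OF q]] by (simp add: Max_le_iff)
qed

lemma lower_ge:
  assumes "v \<in> Vset \<gamma> n"
  shows "ip n v (pvec n q) \<le> lower_bd \<gamma> n q"
  unfolding lower_bd_def using finite_Vset assms by (intro Max_ge) auto




lemma fill:
  fixes x :: "nat \<Rightarrow> real"
  assumes "0 < n" "\<forall>y<n. 0 \<le> x y" "0 \<le> R" "R \<le> (\<Sum>y<n. x y)"
  shows "\<exists>g t. t < n \<and> (\<forall>y<n. 0 \<le> g y \<and> g y \<le> x y) \<and> (\<Sum>y<n. g y) = R \<and>
     (\<forall>y<t. g y = x y) \<and> (\<forall>y<n. t < y \<longrightarrow> g y = 0) \<and> (0 < t \<longrightarrow> 0 < g t)"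
  using assms
proof (induction n arbitrary: R)
  case 0 then show ?case by simp
next
  case (Suc m)
  show ?case
  proof (cases "0 < m \<and> R \<le> (\<Sum>y<m. x y)")
    case True
    then obtain g t where gt: "t < m" "\<forall>y<m. 0 \<le> g y \<and> g y \<le> x y" "(\<Sum>y<m. g y) = R"
      "\<forall>y<t. g y = x y" "\<forall>y<m. t < y \<longrightarrow> g y = 0" "0 < t \<longrightarrow> 0 < g t"
      using Suc.IH[of R] Suc.prems by auto
    let ?g = "g(m := 0)"
    have s: "(\<Sum>y<m. ?g y) = (\<Sum>y<m. g y)" by (intro sum.cong) auto
    show ?thesis
      apply (rule exI[of _ ?g], rule exI[of _ t])
      using gt Suc.prems s by (auto simp: less_Suc_eq)
  next
    case False
    then have R: "(\<Sum>y<m. x y) \<le> R" using Suc.prems by (cases "m = 0") auto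
    let ?g = "\<lambda>y. if y < m then x y else R - (\<Sum>y<m. x y)"
    have s: "(\<Sum>y<m. ?g y) = (\<Sum>y<m. x y)" by (intro sum.cong) auto
    have pos: "0 < m \<longrightarrow> 0 < R - (\<Sum>y<m. x y)" using False by auto
    show ?thesis
      apply (rule exI[of _ ?g], rule exI[of _ m])
      using Suc.prems s R pos by (auto simp: less_Suc_eq)
  qed
qed




lemma prod_coup:
  fixes f g :: "nat \<Rightarrow> real"
  assumes f: "\<forall>y<n. 0 \<le> f y" and g: "\<forall>y<n. 0 \<le> g y" and s: "sum f {..<n} = sum g {..<n}"
  shows "a < n \<Longrightarrow> (\<Sum>b<n. f a * g b / sum g {..<n}) = f a"
    "b < n \<Longrightarrow> (\<Sum>a<n. f a * g b / sum g {..<n}) = g b"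
    "(\<Sum>a<n. \<Sum>b<n. f a * g b / sum g {..<n} * (\<gamma> b - \<gamma> a)) = (\<Sum>b<n. g b * \<gamma> b) - (\<Sum>a<n. f a * \<gamma> a)"
proof -
  show "a < n \<Longrightarrow> (\<Sum>b<n. f a * g b / sum g {..<n}) = f a"
  proof (cases "sum g {..<n} = 0")
    case True
    assume a: "a < n"
    then have "f a = 0" using True s f sum_nonneg_eq_0_iff[of "{..<n}" f] by auto
    then show ?thesis by simp
  next
    case False
    then show ?thesis by (simp add: sum_divide_distrib[symmetric] sum_distrib_left[symmetric])
  qed
  show "b < n \<Longrightarrow> (\<Sum>a<n. f a * g b / sum g {..<n}) = g b"
  proof (cases "sum g {..<n} = 0")
    case True
    assume b: "b < n"
    then have "g b = 0" using True g sum_nonneg_eq_0_iff[of "{..<n}" g] by auto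
    then show ?thesis by simp
  next
    case False
    then show ?thesis using s by (simp add: sum_divide_distrib[symmetric] sum_distrib_right[symmetric])
  qed
  show "(\<Sum>a<n. \<Sum>b<n. f a * g b / sum g {..<n} * (\<gamma> b - \<gamma> a)) = (\<Sum>b<n. g b * \<gamma> b) - (\<Sum>a<n. f a * \<gamma> a)"
  proof (cases "sum g {..<n} = 0")
    case True
    then have "\<forall>y<n. g y = 0" using g sum_nonneg_eq_0_iff[of "{..<n}" g] by auto
    moreover have "\<forall>y<n. f y = 0" using True s f sum_nonneg_eq_0_iff[of "{..<n}" f] by auto
    ultimately show ?thesis by simp
  next
    case False
    let ?S = "sum g {..<n}"
    have "(\<Sum>a<n. \<Sum>b<n. f a * g b / ?S * (\<gamma> b - \<gamma> a)) =
      (\<Sum>a<n. f a * (\<Sum>b<n. g b * \<gamma> b) / ?S) - (\<Sum>a<n. f a * \<gamma> a * (\<Sum>b<n. g b) / ?S)"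
      by (simp add: sum_subtractf[symmetric] sum_distrib_left sum_divide_distrib algebra_simps diff_divide_distrib)
    also have "\<dots> = (\<Sum>b<n. g b * \<gamma> b) - (\<Sum>a<n. f a * \<gamma> a)"
      using False s by (simp add: sum_divide_distrib[symmetric] sum_distrib_right[symmetric])
    finally show ?thesis .
  qed
qed




definition mkpi :: "nat \<Rightarrow> (nat \<Rightarrow> real) \<Rightarrow> (nat \<Rightarrow> real) \<Rightarrow> (nat \<Rightarrow> real) \<Rightarrow> (nat \<Rightarrow> real) \<Rightarrow> (nat \<Rightarrow> real) \<Rightarrow> (nat \<Rightarrow> real) \<Rightarrow> nat \<Rightarrow> nat \<Rightarrow> nat \<Rightarrow> nat \<Rightarrow> real" where
  "mkpi n A B1 C E c1 d0 a b c d = (if a < n \<and> b < n then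
     (if c = 0 \<and> d = 0 then (C a - d0 a) * (if b = 0 then 1 else 0)
      else if c = 1 \<and> d = 1 then (if a = n - 1 then 1 else 0) * (E b - c1 b)
      else if c = 0 \<and> d = 1 then (A a - C a + d0 a) * c1 b / sum c1 {..<n}
      else if c = 1 \<and> d = 0 then d0 a * (B1 b - E b + c1 b) / sum (\<lambda>y. B1 y - E y + c1 y) {..<n}
      else 0) else 0)"

lemma dl0: "(\<Sum>b<(n::nat). X * (if b = k then 1 else 0)) = (if k < n then X else (0::real))"
  by (induct n) auto
lemma dl0': "(\<Sum>b<(n::nat). (if b = k then 1 else 0) * X b) = (if k < n then X k else (0::real))"
  by (induct n) (auto simp: less_Suc_eq)

lemma build:
  fixes A B1 C E c1 d0 \<gamma> :: "nat \<Rightarrow> real"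
  assumes n: "0 < n"
    and nn: "\<forall>y<n. 0 \<le> A y \<and> 0 \<le> B1 y \<and> 0 \<le> C y \<and> 0 \<le> E y"
    and tot: "sum A {..<n} + sum B1 {..<n} = 1" "sum C {..<n} + sum E {..<n} = 1"
    and box: "\<forall>y<n. max 0 (E y - B1 y) \<le> c1 y \<and> c1 y \<le> E y \<and> max 0 (C y - A y) \<le> d0 y \<and> d0 y \<le> C y"
    and bal: "sum c1 {..<n} - sum d0 {..<n} = sum E {..<n} - sum B1 {..<n}"
  shows "\<forall>a b c d. 0 \<le> mkpi n A B1 C E c1 d0 a b c d"
    "\<forall>a b c d. \<not> (a < n \<and> b < n \<and> c < 2 \<and> d < 2) \<longrightarrow> mkpi n A B1 C E c1 d0 a b c d = 0"
    "\<forall>y<n. mA n (mkpi n A B1 C E c1 d0) y = A y \<and> mB n (mkpi n A B1 C E c1 d0) y = B1 y \<and>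
       mC n (mkpi n A B1 C E c1 d0) y = C y \<and> mE n (mkpi n A B1 C E c1 d0) y = E y"
    "ATEp n \<gamma> (mkpi n A B1 C E c1 d0) = (\<Sum>y<n. (C y - d0 y) * (\<gamma> 0 - \<gamma> y) + (E y - c1 y) * (\<gamma> y - \<gamma> (n - 1))
        + c1 y * \<gamma> y - (A y - C y + d0 y) * \<gamma> y + (B1 y - E y + c1 y) * \<gamma> y - d0 y * \<gamma> y)"
proof -
  let ?p = "mkpi n A B1 C E c1 d0"
  define c0 where "c0 y = A y - C y + d0 y" for y
  define d1 where "d1 y = B1 y - E y + c1 y" for y
  have c0n: "\<forall>y<n. 0 \<le> c0 y" using box unfolding c0_def by force
  have d1n: "\<forall>y<n. 0 \<le> d1 y" using box unfolding d1_def by force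
  have c1n: "\<forall>y<n. 0 \<le> c1 y" using box by force
  have d0n: "\<forall>y<n. 0 \<le> d0 y" using box by force
  have sc: "sum c0 {..<n} = sum c1 {..<n}" using bal tot unfolding c0_def
    by (simp add: sum.distrib sum_subtractf)
  have sd: "sum d0 {..<n} = sum d1 {..<n}" using bal tot unfolding d1_def
    by (simp add: sum.distrib sum_subtractf)
  have pdef: "?p a b c d = (if a < n \<and> b < n then
     (if c = 0 \<and> d = 0 then (C a - d0 a) * (if b = 0 then 1 else 0)
      else if c = 1 \<and> d = 1 then (if a = n - 1 then 1 else 0) * (E b - c1 b)
      else if c = 0 \<and> d = 1 then c0 a * c1 b / sum c1 {..<n}
      else if c = 1 \<and> d = 0 then d0 a * d1 b / sum d1 {..<n}
      else 0) else 0)" for a b c d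
    unfolding mkpi_def c0_def d1_def by simp
  show "\<forall>a b c d. 0 \<le> ?p a b c d"
    unfolding pdef using box c0n d1n c1n d0n
    by (auto intro!: divide_nonneg_nonneg mult_nonneg_nonneg sum_nonneg)
  show "\<forall>a b c d. \<not> (a < n \<and> b < n \<and> c < 2 \<and> d < 2) \<longrightarrow> ?p a b c d = 0"
    unfolding pdef by auto
  note PC1 = prod_coup[OF c0n c1n sc] and PC2 = prod_coup[OF d0n d1n sd]
  show "\<forall>y<n. mA n ?p y = A y \<and> mB n ?p y = B1 y \<and> mC n ?p y = C y \<and> mE n ?p y = E y"
  proof (intro allI impI conjI)
    fix y assume y: "y < n"
    have "mA n ?p y = (\<Sum>b<n. (C y - d0 y) * (if b = 0 then 1 else 0)) + (\<Sum>b<n. c0 y * c1 b / sum c1 {..<n})"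
      unfolding mA_def pdef using y by (simp add: sum.distrib)
    also have "\<dots> = A y" using PC1(1)[OF y] n unfolding dl0 c0_def by simp
    finally show "mA n ?p y = A y" .
    have "mB n ?p y = (\<Sum>a<n. d0 a * d1 y / sum d1 {..<n}) + (\<Sum>a<n. (if a = n - 1 then 1 else 0) * (E y - c1 y))"
      unfolding mB_def pdef using y by (simp add: sum.distrib)
    also have "\<dots> = B1 y" using PC2(2)[OF y] n unfolding dl0' d1_def by simp
    finally show "mB n ?p y = B1 y" .
    have "mC n ?p y = (\<Sum>b<n. (C y - d0 y) * (if b = 0 then 1 else 0)) + (\<Sum>b<n. d0 y * d1 b / sum d1 {..<n})"
      unfolding mC_def pdef using y by (simp add: sum.distrib)
    also have "\<dots> = C y" using PC2(1)[OF y] n unfolding dl0 by simp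
    finally show "mC n ?p y = C y" .
    have "mE n ?p y = (\<Sum>a<n. c0 a * c1 y / sum c1 {..<n}) + (\<Sum>a<n. (if a = n - 1 then 1 else 0) * (E y - c1 y))"
      unfolding mE_def pdef using y by (simp add: sum.distrib)
    also have "\<dots> = E y" using PC1(2)[OF y] n unfolding dl0' by simp
    finally show "mE n ?p y = E y" .
  qed
  have t1: "(\<Sum>a<n. \<Sum>b<n. (C a - d0 a) * (if b = 0 then 1 else 0) * (\<gamma> b - \<gamma> a)) = (\<Sum>a<n. (C a - d0 a) * (\<gamma> 0 - \<gamma> a))"
  proof (intro sum.cong refl)
    fix a show "(\<Sum>b<n. (C a - d0 a) * (if b = 0 then 1 else 0) * (\<gamma> b - \<gamma> a)) = (C a - d0 a) * (\<gamma> 0 - \<gamma> a)"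
      using n by (induct n) auto
  qed
  have t2: "(\<Sum>a<n. \<Sum>b<n. (if a = n - 1 then 1 else 0) * (E b - c1 b) * (\<gamma> b - \<gamma> a)) = (\<Sum>b<n. (E b - c1 b) * (\<gamma> b - \<gamma> (n - 1)))"
  proof -
    have "(\<Sum>a<n. \<Sum>b<n. (if a = n - 1 then 1 else 0) * (E b - c1 b) * (\<gamma> b - \<gamma> a)) =
       (\<Sum>a<n. (if a = n - 1 then 1 else 0) * (\<Sum>b<n. (E b - c1 b) * (\<gamma> b - \<gamma> a)))"
      by (simp add: sum_distrib_left mult.assoc)
    also have "\<dots> = (\<Sum>b<n. (E b - c1 b) * (\<gamma> b - \<gamma> (n - 1)))" unfolding dl0' using n by simp
    finally show ?thesis .
  qed
  have "ATEp n \<gamma> ?p = (\<Sum>a<n. \<Sum>b<n. (C a - d0 a) * (if b = 0 then 1 else 0) * (\<gamma> b - \<gamma> a))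
     + (\<Sum>a<n. \<Sum>b<n. c0 a * c1 b / sum c1 {..<n} * (\<gamma> b - \<gamma> a))
     + (\<Sum>a<n. \<Sum>b<n. d0 a * d1 b / sum d1 {..<n} * (\<gamma> b - \<gamma> a))
     + (\<Sum>a<n. \<Sum>b<n. (if a = n - 1 then 1 else 0) * (E b - c1 b) * (\<gamma> b - \<gamma> a))"
  proof -
    have "ATEp n \<gamma> ?p = (\<Sum>a<n. \<Sum>b<n. (C a - d0 a) * (if b = 0 then 1 else 0) * (\<gamma> b - \<gamma> a)
      + c0 a * c1 b / sum c1 {..<n} * (\<gamma> b - \<gamma> a) + d0 a * d1 b / sum d1 {..<n} * (\<gamma> b - \<gamma> a)
      + (if a = n - 1 then 1 else 0) * (E b - c1 b) * (\<gamma> b - \<gamma> a))"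
      unfolding ATEp_def by (intro sum.cong refl) (simp add: pdef algebra_simps)
    then show ?thesis by (simp only: sum.distrib)
  qed
  also have "\<dots> = (\<Sum>y<n. (C y - d0 y) * (\<gamma> 0 - \<gamma> y) + (E y - c1 y) * (\<gamma> y - \<gamma> (n - 1))
        + c1 y * \<gamma> y - (A y - C y + d0 y) * \<gamma> y + (B1 y - E y + c1 y) * \<gamma> y - d0 y * \<gamma> y)"
    unfolding t1 t2 PC1(3) PC2(3) unfolding c0_def d1_def by (simp add: sum.distrib sum_subtractf algebra_simps)
  finally show "ATEp n \<gamma> ?p = (\<Sum>y<n. (C y - d0 y) * (\<gamma> 0 - \<gamma> y) + (E y - c1 y) * (\<gamma> y - \<gamma> (n - 1))
        + c1 y * \<gamma> y - (A y - C y + d0 y) * \<gamma> y + (B1 y - E y + c1 y) * \<gamma> y - d0 y * \<gamma> y)" .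
qed




lemma tight_uvec:
  fixes \<gamma> A B1 C E c1 d0 :: "nat \<Rightarrow> real"
  assumes y: "y < n"
    and P1: "C y - d0 y \<noteq> 0 \<longrightarrow> (B y 0 0 \<noteq> B y 0 1) \<or> (B y 0 0 \<and> B y 0 1 \<and> \<alpha> = - \<gamma> 0 - \<gamma> y)"
    and P2: "E y - c1 y \<noteq> 0 \<longrightarrow> (B y 1 0 \<noteq> B y 1 1) \<or> (B y 1 0 \<and> B y 1 1 \<and> \<alpha> = - \<gamma> y - \<gamma> (n - 1))"
    and P3: "A y - C y + d0 y \<noteq> 0 \<longrightarrow> B y 0 0"
    and P4: "c1 y \<noteq> 0 \<longrightarrow> B y 1 1"
    and P5: "d0 y \<noteq> 0 \<longrightarrow> B y 0 1"
    and P6: "B1 y - E y + c1 y \<noteq> 0 \<longrightarrow> B y 1 0"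
  shows "uvec \<gamma> n \<alpha> B y 0 0 * A y + uvec \<gamma> n \<alpha> B y 1 0 * B1 y + uvec \<gamma> n \<alpha> B y 0 1 * C y + uvec \<gamma> n \<alpha> B y 1 1 * E y
    = (C y - d0 y) * (\<gamma> 0 - \<gamma> y) + (E y - c1 y) * (\<gamma> y - \<gamma> (n - 1))
        + c1 y * \<gamma> y - (A y - C y + d0 y) * \<gamma> y + (B1 y - E y + c1 y) * \<gamma> y - d0 y * \<gamma> y
        + \<alpha> * (c1 y - (A y - C y + d0 y))"
proof -
  let ?u = "uvec \<gamma> n \<alpha> B"
  note U = uv[OF y, of \<gamma> \<alpha> B]
  have f1: "(C y - d0 y) * (?u y 0 0 + ?u y 0 1) = (C y - d0 y) * (\<gamma> 0 - \<gamma> y)"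
    using P1 unfolding U by (cases "C y - d0 y = 0") (auto split: if_splits)
  have f2: "(E y - c1 y) * (?u y 1 0 + ?u y 1 1) = (E y - c1 y) * (\<gamma> y - \<gamma> (n - 1))"
    using P2 unfolding U by (cases "E y - c1 y = 0") (auto split: if_splits)
  have f3: "(A y - C y + d0 y) * ?u y 0 0 = (A y - C y + d0 y) * (- \<gamma> y - \<alpha>)"
    using P3 unfolding U by (cases "A y - C y + d0 y = 0") auto
  have f4: "c1 y * ?u y 1 1 = c1 y * (\<gamma> y + \<alpha>)"
    using P4 unfolding U by (cases "c1 y = 0") auto
  have f5: "d0 y * ?u y 0 1 = d0 y * (- \<gamma> y)"
    using P5 unfolding U by (cases "d0 y = 0") auto
  have f6: "(B1 y - E y + c1 y) * ?u y 1 0 = (B1 y - E y + c1 y) * \<gamma> y"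
    using P6 unfolding U by (cases "B1 y - E y + c1 y = 0") auto
  have "?u y 0 0 * A y + ?u y 1 0 * B1 y + ?u y 0 1 * C y + ?u y 1 1 * E y =
     (C y - d0 y) * (?u y 0 0 + ?u y 0 1) + (E y - c1 y) * (?u y 1 0 + ?u y 1 1)
     + (A y - C y + d0 y) * ?u y 0 0 + c1 y * ?u y 1 1 + d0 y * ?u y 0 1 + (B1 y - E y + c1 y) * ?u y 1 0"
    by (simp add: algebra_simps)
  also have "\<dots> = (C y - d0 y) * (\<gamma> 0 - \<gamma> y) + (E y - c1 y) * (\<gamma> y - \<gamma> (n - 1))
     + (A y - C y + d0 y) * (- \<gamma> y - \<alpha>) + c1 y * (\<gamma> y + \<alpha>) + d0 y * (- \<gamma> y) + (B1 y - E y + c1 y) * \<gamma> y"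
    unfolding f1 f2 f3 f4 f5 f6 ..
  also have "\<dots> = (C y - d0 y) * (\<gamma> 0 - \<gamma> y) + (E y - c1 y) * (\<gamma> y - \<gamma> (n - 1))
        + c1 y * \<gamma> y - (A y - C y + d0 y) * \<gamma> y + (B1 y - E y + c1 y) * \<gamma> y - d0 y * \<gamma> y
        + \<alpha> * (c1 y - (A y - C y + d0 y))"
    by (simp add: algebra_simps)
  finally show ?thesis .
qed

lemma tight_sum:
  fixes \<gamma> A B1 C E c1 d0 :: "nat \<Rightarrow> real" and p :: "nat \<Rightarrow> nat \<Rightarrow> nat \<Rightarrow> nat \<Rightarrow> real"
  assumes m: "\<forall>y<n. mA n p y = A y \<and> mB n p y = B1 y \<and> mC n p y = C y \<and> mE n p y = E y"
    and P: "\<forall>y<n. (C y - d0 y \<noteq> 0 \<longrightarrow> (B y 0 0 \<noteq> B y 0 1) \<or> (B y 0 0 \<and> B y 0 1 \<and> \<alpha> = - \<gamma> 0 - \<gamma> y)) \<and>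
      (E y - c1 y \<noteq> 0 \<longrightarrow> (B y 1 0 \<noteq> B y 1 1) \<or> (B y 1 0 \<and> B y 1 1 \<and> \<alpha> = - \<gamma> y - \<gamma> (n - 1))) \<and>
      (A y - C y + d0 y \<noteq> 0 \<longrightarrow> B y 0 0) \<and> (c1 y \<noteq> 0 \<longrightarrow> B y 1 1) \<and> (d0 y \<noteq> 0 \<longrightarrow> B y 0 1) \<and>
      (B1 y - E y + c1 y \<noteq> 0 \<longrightarrow> B y 1 0)"
    and tot: "sum A {..<n} + sum B1 {..<n} = 1" "sum C {..<n} + sum E {..<n} = 1"
    and bal: "sum c1 {..<n} - sum d0 {..<n} = sum E {..<n} - sum B1 {..<n}"
  shows "ipm n (uvec \<gamma> n \<alpha> B) p = (\<Sum>y<n. (C y - d0 y) * (\<gamma> 0 - \<gamma> y) + (E y - c1 y) * (\<gamma> y - \<gamma> (n - 1))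
        + c1 y * \<gamma> y - (A y - C y + d0 y) * \<gamma> y + (B1 y - E y + c1 y) * \<gamma> y - d0 y * \<gamma> y)"
proof -
  have "ipm n (uvec \<gamma> n \<alpha> B) p = (\<Sum>y<n. (C y - d0 y) * (\<gamma> 0 - \<gamma> y) + (E y - c1 y) * (\<gamma> y - \<gamma> (n - 1))
        + c1 y * \<gamma> y - (A y - C y + d0 y) * \<gamma> y + (B1 y - E y + c1 y) * \<gamma> y - d0 y * \<gamma> y
        + \<alpha> * (c1 y - (A y - C y + d0 y)))"
    unfolding ipm_def
  proof (intro sum.cong refl)
    fix y assume "y \<in> {..<n}"
    then have y: "y < n" by simp
    show "uvec \<gamma> n \<alpha> B y 0 0 * mA n p y + uvec \<gamma> n \<alpha> B y 1 0 * mB n p y + uvec \<gamma> n \<alpha> B y 0 1 * mC n p y + uvec \<gamma> n \<alpha> B y 1 1 * mE n p y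
      = (C y - d0 y) * (\<gamma> 0 - \<gamma> y) + (E y - c1 y) * (\<gamma> y - \<gamma> (n - 1))
        + c1 y * \<gamma> y - (A y - C y + d0 y) * \<gamma> y + (B1 y - E y + c1 y) * \<gamma> y - d0 y * \<gamma> y
        + \<alpha> * (c1 y - (A y - C y + d0 y))"
      using m y P tight_uvec[OF y, of C d0 B \<alpha> \<gamma> E c1 A B1] by auto
  qed
  also have "\<dots> = (\<Sum>y<n. (C y - d0 y) * (\<gamma> 0 - \<gamma> y) + (E y - c1 y) * (\<gamma> y - \<gamma> (n - 1))
        + c1 y * \<gamma> y - (A y - C y + d0 y) * \<gamma> y + (B1 y - E y + c1 y) * \<gamma> y - d0 y * \<gamma> y)
        + \<alpha> * (sum c1 {..<n} - (sum A {..<n} - sum C {..<n} + sum d0 {..<n}))"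
    by (simp add: sum.distrib sum_subtractf flip: sum_distrib_left)
  also have "sum c1 {..<n} - (sum A {..<n} - sum C {..<n} + sum d0 {..<n}) = 0" using tot bal by simp
  finally show ?thesis by simp
qed




definition GOOD :: "nat \<Rightarrow> (nat \<Rightarrow> real) \<Rightarrow> (nat \<Rightarrow> real) \<Rightarrow> (nat \<Rightarrow> real) \<Rightarrow> (nat \<Rightarrow> real) \<Rightarrow> (nat \<Rightarrow> real) \<Rightarrow> (nat \<Rightarrow> real) \<Rightarrow> (nat \<Rightarrow> real) \<Rightarrow> real \<Rightarrow> (nat \<Rightarrow> nat \<Rightarrow> nat \<Rightarrow> bool) \<Rightarrow> bool" where
  "GOOD n \<gamma> A B1 C E c1 d0 \<alpha> B \<longleftrightarrow>
    (\<forall>y<n. max 0 (E y - B1 y) \<le> c1 y \<and> c1 y \<le> E y \<and> max 0 (C y - A y) \<le> d0 y \<and> d0 y \<le> C y) \<and>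
    sum c1 {..<n} - sum d0 {..<n} = sum E {..<n} - sum B1 {..<n} \<and>
    uvec \<gamma> n \<alpha> B \<in> Vset \<gamma> n \<and>
    (\<forall>y<n. (C y - d0 y \<noteq> 0 \<longrightarrow> (B y 0 0 \<noteq> B y 0 1) \<or> (B y 0 0 \<and> B y 0 1 \<and> \<alpha> = - \<gamma> 0 - \<gamma> y)) \<and>
      (E y - c1 y \<noteq> 0 \<longrightarrow> (B y 1 0 \<noteq> B y 1 1) \<or> (B y 1 0 \<and> B y 1 1 \<and> \<alpha> = - \<gamma> y - \<gamma> (n - 1))) \<and>
      (A y - C y + d0 y \<noteq> 0 \<longrightarrow> B y 0 0) \<and> (c1 y \<noteq> 0 \<longrightarrow> B y 1 1) \<and> (d0 y \<noteq> 0 \<longrightarrow> B y 0 1) \<and>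
      (B1 y - E y + c1 y \<noteq> 0 \<longrightarrow> B y 1 0))"

lemma pos_ex:
  fixes f h :: "nat \<Rightarrow> real"
  assumes "\<forall>y<n. 0 \<le> f y" "t < n" "0 < f t" "sum f {..<n} = sum h {..<n}"
  shows "\<exists>i<n. h i \<noteq> 0"
proof (rule ccontr)
  assume "\<not> (\<exists>i<n. h i \<noteq> 0)"
  then have "sum h {..<n} = 0" by (intro sum.neutral) auto
  moreover have "f t \<le> sum f {..<n}" using assms by (intro member_le_sum) auto
  ultimately show False using assms by simp
qed

lemma caseI:
  fixes \<gamma> A B1 C E g :: "nat \<Rightarrow> real"
  assumes n: "0 < n"
    and nn: "\<forall>y<n. 0 \<le> A y \<and> 0 \<le> B1 y \<and> 0 \<le> C y \<and> 0 \<le> E y"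
    and tot: "sum A {..<n} + sum B1 {..<n} = 1" "sum C {..<n} + sum E {..<n} = 1"
    and t: "t < n"
    and g0: "\<forall>y<n. 0 \<le> g y \<and> g y \<le> E y - max 0 (E y - B1 y)"
    and gs: "sum (\<lambda>y. max 0 (E y - B1 y)) {..<n} + sum g {..<n} - sum (\<lambda>y. max 0 (C y - A y)) {..<n}
       = sum E {..<n} - sum B1 {..<n}"
    and gl: "\<forall>y<t. g y = E y - max 0 (E y - B1 y)"
    and gu: "\<forall>y<n. t < y \<longrightarrow> g y = 0"
    and gp: "0 < t \<longrightarrow> 0 < g t"
  shows "\<exists>c1 d0 \<alpha> B. GOOD n \<gamma> A B1 C E c1 d0 \<alpha> B"
proof -
  define L1 where "L1 y = max 0 (E y - B1 y)" for y
  define c1 where "c1 y = L1 y + g y" for y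
  define d0 where "d0 y = max 0 (C y - A y)" for y
  define \<alpha> where "\<alpha> = - \<gamma> t - \<gamma> (n - 1)"
  define B where "B (i::nat) (d::nat) (z::nat) = (if d = 0 then (if z = 0 then (d0 i = 0 \<or> (t = 0 \<and> i = n - 1)) else (d0 i \<noteq> 0 \<or> (t = 0 \<and> i = n - 1)))
     else (if z = 0 then (i \<le> t \<or> c1 i = 0) else (i \<le> t \<or> c1 i \<noteq> 0)))" for i d z
  have box: "\<forall>y<n. max 0 (E y - B1 y) \<le> c1 y \<and> c1 y \<le> E y \<and> max 0 (C y - A y) \<le> d0 y \<and> d0 y \<le> C y"
    using g0 nn unfolding c1_def L1_def d0_def by force
  have bal: "sum c1 {..<n} - sum d0 {..<n} = sum E {..<n} - sum B1 {..<n}"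
    using gs unfolding c1_def L1_def d0_def by (simp add: sum.distrib)
  have sc: "sum (\<lambda>y. A y - C y + d0 y) {..<n} = sum c1 {..<n}"
    using bal tot by (simp add: sum.distrib sum_subtractf)
  have sd: "sum (\<lambda>y. B1 y - E y + c1 y) {..<n} = sum d0 {..<n}"
    using bal tot by (simp add: sum.distrib sum_subtractf)
  have P: "\<forall>y<n. (C y - d0 y \<noteq> 0 \<longrightarrow> (B y 0 0 \<noteq> B y 0 1) \<or> (B y 0 0 \<and> B y 0 1 \<and> \<alpha> = - \<gamma> 0 - \<gamma> y)) \<and>
      (E y - c1 y \<noteq> 0 \<longrightarrow> (B y 1 0 \<noteq> B y 1 1) \<or> (B y 1 0 \<and> B y 1 1 \<and> \<alpha> = - \<gamma> y - \<gamma> (n - 1))) \<and>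
      (A y - C y + d0 y \<noteq> 0 \<longrightarrow> B y 0 0) \<and> (c1 y \<noteq> 0 \<longrightarrow> B y 1 1) \<and> (d0 y \<noteq> 0 \<longrightarrow> B y 0 1) \<and>
      (B1 y - E y + c1 y \<noteq> 0 \<longrightarrow> B y 1 0)"
  proof (intro allI impI conjI)
    fix y assume y: "y < n"
    show "C y - d0 y \<noteq> 0 \<Longrightarrow> (B y 0 0 \<noteq> B y 0 1) \<or> (B y 0 0 \<and> B y 0 1 \<and> \<alpha> = - \<gamma> 0 - \<gamma> y)"
      unfolding B_def \<alpha>_def by auto
    show "E y - c1 y \<noteq> 0 \<Longrightarrow> (B y 1 0 \<noteq> B y 1 1) \<or> (B y 1 0 \<and> B y 1 1 \<and> \<alpha> = - \<gamma> y - \<gamma> (n - 1))"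
    proof -
      assume ne: "E y - c1 y \<noteq> 0"
      have "\<not> y < t" using gl ne y unfolding c1_def L1_def by auto
      then show ?thesis unfolding B_def \<alpha>_def by (cases "y = t") auto
    qed
    show "A y - C y + d0 y \<noteq> 0 \<Longrightarrow> B y 0 0"
      unfolding B_def d0_def by (auto simp: max_def split: if_splits)
    show "c1 y \<noteq> 0 \<Longrightarrow> B y 1 1" unfolding B_def by auto
    show "d0 y \<noteq> 0 \<Longrightarrow> B y 0 1" unfolding B_def by auto
    show "B1 y - E y + c1 y \<noteq> 0 \<Longrightarrow> B y 1 0"
      using gu y unfolding B_def c1_def L1_def by (cases "t < y") (auto simp: max_def split: if_splits)
  qed
  have V: "uvec \<gamma> n \<alpha> B \<in> Vset \<gamma> n"
  proof (cases "t = 0")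
    case True
    have "S2 n B" unfolding S2_def using True n by (auto simp: B_def)
    then show ?thesis unfolding Vset_def \<alpha>_def True by blast
  next
    case False
    have ct: "0 < c1 t" using gp False unfolding c1_def L1_def by auto
    obtain i where i: "i < n" "A i - C i + d0 i \<noteq> 0"
      using pos_ex[of n c1 t "\<lambda>y. A y - C y + d0 y"] box ct t sc by force
    have dt: "0 < B1 t - E t + c1 t" using gp False unfolding c1_def L1_def by auto
    have dn: "\<forall>y<n. 0 \<le> B1 y - E y + c1 y" using box by force
    obtain j where j: "j < n" "d0 j \<noteq> 0"
      using pos_ex[OF dn t dt sd] by blast
    have "S3 n B t" unfolding S3_def using False t i j P
      by (auto simp: B_def)
    then show ?thesis unfolding Vset_def \<alpha>_def by blast
  qed
  show ?thesis unfolding GOOD_def using box bal V P by blast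
qed

lemma caseII:
  fixes \<gamma> A B1 C E h :: "nat \<Rightarrow> real"
  assumes n: "0 < n"
    and nn: "\<forall>y<n. 0 \<le> A y \<and> 0 \<le> B1 y \<and> 0 \<le> C y \<and> 0 \<le> E y"
    and tot: "sum A {..<n} + sum B1 {..<n} = 1" "sum C {..<n} + sum E {..<n} = 1"
    and t: "t < n"
    and h0: "\<forall>y<n. 0 \<le> h y \<and> h y \<le> C y - max 0 (C y - A y)"
    and hs: "sum (\<lambda>y. max 0 (E y - B1 y)) {..<n} - sum (\<lambda>y. max 0 (C y - A y)) {..<n} - sum h {..<n}
       = sum E {..<n} - sum B1 {..<n}"
    and hl: "\<forall>y<n. t < y \<longrightarrow> h y = C y - max 0 (C y - A y)"
    and hu: "\<forall>y<t. h y = 0"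
    and hp: "t < n - 1 \<longrightarrow> 0 < h t"
  shows "\<exists>c1 d0 \<alpha> B. GOOD n \<gamma> A B1 C E c1 d0 \<alpha> B"
proof -
  define L2 where "L2 y = max 0 (C y - A y)" for y
  define c1 where "c1 y = max 0 (E y - B1 y)" for y
  define d0 where "d0 y = L2 y + h y" for y
  define \<alpha> where "\<alpha> = - \<gamma> 0 - \<gamma> t"
  define B where "B (i::nat) (d::nat) (z::nat) = (if d = 0 then (if z = 0 then (t \<le> i \<or> d0 i = 0) else (t \<le> i \<or> d0 i \<noteq> 0))
     else (if z = 0 then (c1 i = 0 \<or> (t = n - 1 \<and> i = 0)) else (c1 i \<noteq> 0 \<or> (t = n - 1 \<and> i = 0))))" for i d z
  have box: "\<forall>y<n. max 0 (E y - B1 y) \<le> c1 y \<and> c1 y \<le> E y \<and> max 0 (C y - A y) \<le> d0 y \<and> d0 y \<le> C y"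
    using h0 nn unfolding c1_def L2_def d0_def by force
  have bal: "sum c1 {..<n} - sum d0 {..<n} = sum E {..<n} - sum B1 {..<n}"
    using hs unfolding c1_def L2_def d0_def by (simp add: sum.distrib)
  have sc: "sum (\<lambda>y. A y - C y + d0 y) {..<n} = sum c1 {..<n}"
    using bal tot by (simp add: sum.distrib sum_subtractf)
  have sd: "sum (\<lambda>y. B1 y - E y + c1 y) {..<n} = sum d0 {..<n}"
    using bal tot by (simp add: sum.distrib sum_subtractf)
  have P: "\<forall>y<n. (C y - d0 y \<noteq> 0 \<longrightarrow> (B y 0 0 \<noteq> B y 0 1) \<or> (B y 0 0 \<and> B y 0 1 \<and> \<alpha> = - \<gamma> 0 - \<gamma> y)) \<and>
      (E y - c1 y \<noteq> 0 \<longrightarrow> (B y 1 0 \<noteq> B y 1 1) \<or> (B y 1 0 \<and> B y 1 1 \<and> \<alpha> = - \<gamma> y - \<gamma> (n - 1))) \<and>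
      (A y - C y + d0 y \<noteq> 0 \<longrightarrow> B y 0 0) \<and> (c1 y \<noteq> 0 \<longrightarrow> B y 1 1) \<and> (d0 y \<noteq> 0 \<longrightarrow> B y 0 1) \<and>
      (B1 y - E y + c1 y \<noteq> 0 \<longrightarrow> B y 1 0)"
  proof (intro allI impI conjI)
    fix y assume y: "y < n"
    show "C y - d0 y \<noteq> 0 \<Longrightarrow> (B y 0 0 \<noteq> B y 0 1) \<or> (B y 0 0 \<and> B y 0 1 \<and> \<alpha> = - \<gamma> 0 - \<gamma> y)"
    proof -
      assume ne: "C y - d0 y \<noteq> 0"
      have "\<not> t < y" using hl ne y unfolding d0_def L2_def by auto
      then show ?thesis unfolding B_def \<alpha>_def by (cases "y = t") auto
    qed
    show "E y - c1 y \<noteq> 0 \<Longrightarrow> (B y 1 0 \<noteq> B y 1 1) \<or> (B y 1 0 \<and> B y 1 1 \<and> \<alpha> = - \<gamma> y - \<gamma> (n - 1))"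
      unfolding B_def \<alpha>_def by (cases "y = 0") auto
    show "A y - C y + d0 y \<noteq> 0 \<Longrightarrow> B y 0 0"
      using hu y unfolding B_def d0_def L2_def by (cases "y < t") (auto simp: max_def split: if_splits)
    show "c1 y \<noteq> 0 \<Longrightarrow> B y 1 1" unfolding B_def by auto
    show "d0 y \<noteq> 0 \<Longrightarrow> B y 0 1" unfolding B_def by auto
    show "B1 y - E y + c1 y \<noteq> 0 \<Longrightarrow> B y 1 0"
      unfolding B_def c1_def by (auto simp: max_def split: if_splits)
  qed
  have V: "uvec \<gamma> n \<alpha> B \<in> Vset \<gamma> n"
  proof (cases "t = n - 1")
    case True
    have "S2 n B" unfolding S2_def using True n by (auto simp: B_def)
    then show ?thesis unfolding Vset_def \<alpha>_def True by blast
  next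
    case False
    then have tl: "t < n - 1" using t by auto
    have dt: "0 < d0 t" using hp tl unfolding d0_def L2_def by auto
    have d0n: "\<forall>y<n. 0 \<le> d0 y" using box by force
    obtain i where i: "i < n" "B1 i - E i + c1 i \<noteq> 0"
      using pos_ex[OF d0n t dt, of "\<lambda>y. B1 y - E y + c1 y"] sd by auto
    have ct: "0 < A t - C t + d0 t" using hp tl unfolding d0_def L2_def by auto
    have cn: "\<forall>y<n. 0 \<le> A y - C y + d0 y" using box by force
    obtain j where j: "j < n" "c1 j \<noteq> 0"
      using pos_ex[OF cn t ct sc] by blast
    have "S1 n B t" unfolding S1_def using False tl i j P
      by (auto simp: B_def)
    then show ?thesis unfolding Vset_def \<alpha>_def by blast
  qed
  show ?thesis unfolding GOOD_def using box bal V P by blast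
qed




lemma choose:
  fixes \<gamma> A B1 C E :: "nat \<Rightarrow> real"
  assumes n: "0 < n"
    and nn: "\<forall>y<n. 0 \<le> A y \<and> 0 \<le> B1 y \<and> 0 \<le> C y \<and> 0 \<le> E y"
    and tot: "sum A {..<n} + sum B1 {..<n} = 1" "sum C {..<n} + sum E {..<n} = 1"
    and feas: "\<forall>y<n. max 0 (E y - B1 y) \<le> c y \<and> c y \<le> E y \<and> max 0 (C y - A y) \<le> d y \<and> d y \<le> C y"
      "sum c {..<n} - sum d {..<n} = sum E {..<n} - sum B1 {..<n}"
  shows "\<exists>c1 d0 \<alpha> B. GOOD n \<gamma> A B1 C E c1 d0 \<alpha> B"
proof -
  define L1 where "L1 y = max 0 (E y - B1 y)" for y
  define L2 where "L2 y = max 0 (C y - A y)" for y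
  define k where "k = sum E {..<n} - sum B1 {..<n}"
  have i1: "sum L1 {..<n} \<le> sum c {..<n}" using feas(1) unfolding L1_def by (intro sum_mono) auto
  have i2: "sum c {..<n} \<le> sum E {..<n}" using feas(1) by (intro sum_mono) auto
  have i3: "sum L2 {..<n} \<le> sum d {..<n}" using feas(1) unfolding L2_def by (intro sum_mono) auto
  have i4: "sum d {..<n} \<le> sum C {..<n}" using feas(1) by (intro sum_mono) auto
  have bal: "sum c {..<n} - sum d {..<n} = k" using feas(2) unfolding k_def .
  show ?thesis
  proof (cases "sum L1 {..<n} \<le> k + sum L2 {..<n}")
    case True
    define x where "x y = E y - L1 y" for y
    have x0: "\<forall>y<n. 0 \<le> x y" using nn unfolding x_def L1_def by auto
    have sx: "sum x {..<n} = sum E {..<n} - sum L1 {..<n}" unfolding x_def by (simp add: sum_subtractf)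
    obtain g t where gt: "t < n" "\<forall>y<n. 0 \<le> g y \<and> g y \<le> x y"
      "sum g {..<n} = k + sum L2 {..<n} - sum L1 {..<n}"
      "\<forall>y<t. g y = x y" "\<forall>y<n. t < y \<longrightarrow> g y = 0" "0 < t \<longrightarrow> 0 < g t"
      using fill[OF n x0, of "k + sum L2 {..<n} - sum L1 {..<n}"] True sx i1 i2 i3 i4 bal by auto
    show ?thesis
      apply (rule caseI[OF n nn tot gt(1), of g])
      using gt unfolding x_def L1_def L2_def k_def by auto
  next
    case False
    define x where "x j = C (n - Suc j) - L2 (n - Suc j)" for j
    have x0: "\<forall>y<n. 0 \<le> x y" using nn unfolding x_def L2_def by auto
    have sx: "sum x {..<n} = sum C {..<n} - sum L2 {..<n}"
      unfolding x_def sum.nat_diff_reindex[of "\<lambda>y. C y - L2 y"] by (simp add: sum_subtractf)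
    obtain g t' where gt: "t' < n" "\<forall>y<n. 0 \<le> g y \<and> g y \<le> x y"
      "sum g {..<n} = sum L1 {..<n} - k - sum L2 {..<n}"
      "\<forall>y<t'. g y = x y" "\<forall>y<n. t' < y \<longrightarrow> g y = 0" "0 < t' \<longrightarrow> 0 < g t'"
      using fill[OF n x0, of "sum L1 {..<n} - k - sum L2 {..<n}"] False sx i1 i2 i3 i4 bal by auto
    define h where "h y = g (n - Suc y)" for y
    define t where "t = n - Suc t'"
    have t: "t < n" unfolding t_def using n by auto
    have h0: "\<forall>y<n. 0 \<le> h y \<and> h y \<le> C y - L2 y"
    proof (intro allI impI)
      fix y assume y: "y < n"
      then have "n - Suc y < n" "n - Suc (n - Suc y) = y" by auto
      then show "0 \<le> h y \<and> h y \<le> C y - L2 y" using gt(2) unfolding h_def x_def by metis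
    qed
    have sh: "sum h {..<n} = sum g {..<n}" unfolding h_def by (rule sum.nat_diff_reindex)
    have hl: "\<forall>y<n. t < y \<longrightarrow> h y = C y - L2 y"
    proof (intro allI impI)
      fix y assume y: "y < n" "t < y"
      then have "n - Suc y < t'" "n - Suc (n - Suc y) = y" unfolding t_def by auto
      then show "h y = C y - L2 y" using gt(4) unfolding h_def x_def by metis
    qed
    have hu: "\<forall>y<t. h y = 0"
    proof (intro allI impI)
      fix y assume y: "y < t"
      then have "t' < n - Suc y" "n - Suc y < n" using t unfolding t_def by auto
      then show "h y = 0" using gt(5) unfolding h_def by metis
    qed
    have hp: "t < n - 1 \<longrightarrow> 0 < h t"
    proof
      assume "t < n - 1"
      then have "0 < t'" "n - Suc t = t'" unfolding t_def using gt(1) by auto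
      then show "0 < h t" using gt(6) unfolding h_def by simp
    qed
    show ?thesis
      apply (rule caseII[OF n nn tot t, of h])
      using h0 hl hu hp sh gt(3) unfolding L1_def L2_def k_def by auto
  qed
qed




lemma tot_m:
  "(\<Sum>y<n. mA n p y) + (\<Sum>y<n. mB n p y) = (\<Sum>a<n. \<Sum>b<n. \<Sum>c<2. \<Sum>d<2. p a b c d)"
  "(\<Sum>y<n. mC n p y) + (\<Sum>y<n. mE n p y) = (\<Sum>a<n. \<Sum>b<n. \<Sum>c<2. \<Sum>d<2. p a b c d)"
proof -
  have s1: "(\<Sum>y<n. mB n p y) = (\<Sum>a<n. \<Sum>b<n. p a b 1 0 + p a b 1 1)"
    unfolding mB_def by (rule sum.swap)
  show "(\<Sum>y<n. mA n p y) + (\<Sum>y<n. mB n p y) = (\<Sum>a<n. \<Sum>b<n. \<Sum>c<2. \<Sum>d<2. p a b c d)"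
    unfolding s1 mA_def sum2 by (simp add: sum.distrib[symmetric] algebra_simps)
  have s2: "(\<Sum>y<n. mE n p y) = (\<Sum>a<n. \<Sum>b<n. p a b 0 1 + p a b 1 1)"
    unfolding mE_def by (rule sum.swap)
  show "(\<Sum>y<n. mC n p y) + (\<Sum>y<n. mE n p y) = (\<Sum>a<n. \<Sum>b<n. \<Sum>c<2. \<Sum>d<2. p a b c d)"
    unfolding s2 mC_def sum2 by (simp add: sum.distrib[symmetric] algebra_simps)
qed

lemma pii_sum: "IV_law n q \<Longrightarrow> (\<Sum>a<n. \<Sum>b<n. \<Sum>c<2. \<Sum>d<2. pii q a b c d) = 1"
  unfolding pii_def using IV_sum by blast

lemma pZ_nonneg: "IV_law n q \<Longrightarrow> 0 \<le> pZ n q z"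
  unfolding pZ_def by (intro sum_nonneg) (simp add: IV_nonneg)

lemma pZ_zero: "IV_law n q \<Longrightarrow> 2 \<le> z \<Longrightarrow> pZ n q z = 0"
  unfolding pZ_def by (intro sum.neutral ballI) (simp add: IV_zero)

lemma lower_sharp:
  fixes \<gamma> :: "nat \<Rightarrow> real"
  assumes mono: "strict_mono_on {..<n} \<gamma>" and q: "IV_law n q" and pz: "\<forall>z<2. 0 < pZ n q z"
  shows "\<exists>q1. IV_law n q1 \<and> obs n q1 = obs n q \<and> ATE n \<gamma> q1 = lower_bd \<gamma> n q"
proof -
  define p where "p = pii q"
  define A where "A = mA n p"
  define B1 where "B1 = mB n p"
  define C where "C = mC n p"
  define E where "E = mE n p"
  have n: "0 < n" by (rule IV_npos[OF q])
  have pn: "\<And>a b c d. 0 \<le> p a b c d" unfolding p_def by (rule pii_nonneg[OF q])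
  have nn: "\<forall>y<n. 0 \<le> A y \<and> 0 \<le> B1 y \<and> 0 \<le> C y \<and> 0 \<le> E y"
    unfolding A_def B1_def C_def E_def mA_def mB_def mC_def mE_def using pn by (auto intro!: sum_nonneg add_nonneg_nonneg)
  have tot: "sum A {..<n} + sum B1 {..<n} = 1" "sum C {..<n} + sum E {..<n} = 1"
    unfolding A_def B1_def C_def E_def tot_m p_def using pii_sum[OF q] by auto
  define c where "c y = (\<Sum>a<n. p a y 0 1)" for y
  define d where "d y = (\<Sum>b<n. p y b 1 0)" for y
  have feas1: "\<forall>y<n. max 0 (E y - B1 y) \<le> c y \<and> c y \<le> E y \<and> max 0 (C y - A y) \<le> d y \<and> d y \<le> C y"
  proof (intro allI impI conjI)
    fix y assume y: "y < n"
    have "E y - B1 y = c y - (\<Sum>a<n. p a y 1 0)"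
      unfolding E_def B1_def mE_def mB_def c_def by (simp add: sum.distrib)
    moreover have "0 \<le> (\<Sum>a<n. p a y 1 0)" "0 \<le> c y" unfolding c_def using pn by (auto intro: sum_nonneg)
    ultimately show "max 0 (E y - B1 y) \<le> c y" by simp
    show "c y \<le> E y" unfolding E_def mE_def c_def using pn by (intro sum_mono) auto
    have "C y - A y = d y - (\<Sum>b<n. p y b 0 1)"
      unfolding C_def A_def mC_def mA_def d_def by (simp add: sum.distrib)
    moreover have "0 \<le> (\<Sum>b<n. p y b 0 1)" "0 \<le> d y" unfolding d_def using pn by (auto intro: sum_nonneg)
    ultimately show "max 0 (C y - A y) \<le> d y" by simp
    show "d y \<le> C y" unfolding C_def mC_def d_def using pn by (intro sum_mono) auto
  qed
  have feas2: "sum c {..<n} - sum d {..<n} = sum E {..<n} - sum B1 {..<n}"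
  proof -
    have "sum d {..<n} = (\<Sum>y<n. \<Sum>a<n. p a y 1 0)" unfolding d_def by (rule sum.swap)
    then show ?thesis unfolding E_def B1_def mE_def mB_def c_def by (simp add: sum.distrib)
  qed
  obtain c1 d0 \<alpha> B where G: "GOOD n \<gamma> A B1 C E c1 d0 \<alpha> B"
    using choose[OF n nn tot feas1 feas2] by blast
  have box: "\<forall>y<n. max 0 (E y - B1 y) \<le> c1 y \<and> c1 y \<le> E y \<and> max 0 (C y - A y) \<le> d0 y \<and> d0 y \<le> C y"
    and bal: "sum c1 {..<n} - sum d0 {..<n} = sum E {..<n} - sum B1 {..<n}"
    and uV: "uvec \<gamma> n \<alpha> B \<in> Vset \<gamma> n"
    and P: "\<forall>y<n. (C y - d0 y \<noteq> 0 \<longrightarrow> (B y 0 0 \<noteq> B y 0 1) \<or> (B y 0 0 \<and> B y 0 1 \<and> \<alpha> = - \<gamma> 0 - \<gamma> y)) \<and>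
      (E y - c1 y \<noteq> 0 \<longrightarrow> (B y 1 0 \<noteq> B y 1 1) \<or> (B y 1 0 \<and> B y 1 1 \<and> \<alpha> = - \<gamma> y - \<gamma> (n - 1))) \<and>
      (A y - C y + d0 y \<noteq> 0 \<longrightarrow> B y 0 0) \<and> (c1 y \<noteq> 0 \<longrightarrow> B y 1 1) \<and> (d0 y \<noteq> 0 \<longrightarrow> B y 0 1) \<and>
      (B1 y - E y + c1 y \<noteq> 0 \<longrightarrow> B y 1 0)"
    using G unfolding GOOD_def by blast+
  define \<pi> where "\<pi> = mkpi n A B1 C E c1 d0"
  note BU = build[OF n nn tot box bal, folded \<pi>_def]
  define w where "w z = (if z < 2 then pZ n q z else 0)" for z
  define q1 where "q1 a b c d z = \<pi> a b c d * w z" for a b c d z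
  have wq: "w = pZ n q" unfolding w_def using pZ_zero[OF q] by (intro ext) auto
  have w01: "w 0 + w 1 = 1" unfolding w_def using pZ_sum[OF q] by simp
  have spi: "(\<Sum>a<n. \<Sum>b<n. \<Sum>c<2. \<Sum>d<2. \<pi> a b c d) = 1"
  proof -
    have "(\<Sum>y<n. mA n \<pi> y) = sum A {..<n}" "(\<Sum>y<n. mB n \<pi> y) = sum B1 {..<n}"
      using BU(3) by (auto intro: sum.cong)
    then show ?thesis using tot_m(1)[of n \<pi>] tot by simp
  qed
  have pZ1: "pZ n q1 z = w z" for z
  proof -
    have "pZ n q1 z = (\<Sum>a<n. \<Sum>b<n. \<Sum>c<2. \<Sum>d<2. \<pi> a b c d) * w z"
      unfolding pZ_def q1_def by (simp add: sum_distrib_right)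
    then show ?thesis using spi by simp
  qed
  have pZeq: "pZ n q1 = pZ n q" using pZ1 wq by (intro ext) simp
  have fq: "\<And>a b c d z. q a b c d z = p a b c d * pZ n q z" unfolding p_def by (rule IV_fact[OF q])
  have obs_eq: "obs n q1 = obs n q"
  proof (intro ext)
    fix y dd z
    show "obs n q1 y dd z = obs n q y dd z"
    proof (cases "z < 2 \<and> dd < 2")
      case False
      then consider "2 \<le> z" | "2 \<le> dd" by linarith
      then show ?thesis
      proof cases
        case 1
        have nz: "\<not> z < 2" using 1 by simp
        have "obs n q1 y dd z = 0" by (rule obs_z) (simp add: q1_def w_def nz)
        moreover have "obs n q y dd z = 0" by (rule obs_z) (use 1 IV_zero[OF q] in auto)
        ultimately show ?thesis by simp
      next
        case 2 then show ?thesis by (simp add: obs2)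
      qed
    next
      case True
      then have zz: "z = 0 \<or> z = 1" "dd = 0 \<or> dd = 1" by auto
      have m: "y < n \<Longrightarrow> mA n \<pi> y = mA n p y \<and> mB n \<pi> y = mB n p y \<and> mC n \<pi> y = mC n p y \<and> mE n \<pi> y = mE n p y"
        using BU(3) unfolding A_def B1_def C_def E_def by auto
      show ?thesis
        using zz obs_fact[of q1 \<pi> w n y, OF q1_def] obs_fact[of q p "pZ n q" n y, OF fq] m wq
        by (cases "y < n") auto
    qed
  qed
  have piq1: "pii q1 = \<pi>" unfolding pii_def q1_def sum2 using w01
    by (intro ext) (simp add: distrib_left[symmetric])
  have q1IV: "IV_law n q1"
    unfolding IV_law_def full_law_def rand_assign_def
  proof (intro conjI allI impI)
    fix a b c d z
    show "0 \<le> q1 a b c d z" unfolding q1_def w_def using BU(1) pZ_nonneg[OF q] by auto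
    show "\<not> (a < n \<and> b < n \<and> c < 2 \<and> d < 2 \<and> z < 2) \<Longrightarrow> q1 a b c d z = 0"
      unfolding q1_def w_def using BU(2) by auto
    show "q1 a b c d z = (\<Sum>z'<2. q1 a b c d z') * pZ n q1 z"
      using piq1 unfolding pii_def pZ1 q1_def by (metis)
  next
    show "(\<Sum>a<n. \<Sum>b<n. \<Sum>c<2. \<Sum>d<2. \<Sum>z<2. q1 a b c d z) = 1"
    proof -
      have qq: "\<And>a b c d. (\<Sum>z<2. q1 a b c d z) = \<pi> a b c d" using piq1 unfolding pii_def by metis
      show ?thesis using spi by (simp add: qq)
    qed
  qed
  have pvec_eq: "pvec n q1 = pvec n q" unfolding pvec_def[abs_def] obs_eq pZeq ..
  have lb_eq: "lower_bd \<gamma> n q1 = lower_bd \<gamma> n q" unfolding lower_bd_def pvec_eq ..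
  have pz1: "\<forall>z<2. 0 < pZ n q1 z" using pz pZeq by simp
  have ATE1: "ATE n \<gamma> q1 = ipm n (uvec \<gamma> n \<alpha> B) \<pi>"
    unfolding ATE_p piq1 BU(4) using tight_sum[OF BU(3) P tot bal] by simp
  have "ipm n (uvec \<gamma> n \<alpha> B) \<pi> = ipm n (uvec \<gamma> n \<alpha> B) p"
    unfolding ipm_def using BU(3) unfolding A_def B1_def C_def E_def by (intro sum.cong) auto
  also have "\<dots> = ip n (uvec \<gamma> n \<alpha> B) (pvec n q)" unfolding p_def by (rule ip_pvec[OF q pz, symmetric])
  also have "\<dots> \<le> lower_bd \<gamma> n q" by (rule lower_ge[OF uV])
  finally have le1: "ATE n \<gamma> q1 \<le> lower_bd \<gamma> n q" using ATE1 by simp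
  have le2: "lower_bd \<gamma> n q \<le> ATE n \<gamma> q1" using lower_le[OF mono q1IV pz1] lb_eq by simp
  show ?thesis using q1IV obs_eq le1 le2 by (intro exI[of _ q1]) auto
qed




lemma obs0z: "z \<noteq> 0 \<Longrightarrow> obs n q y 0 z = (if y < n then (\<Sum>b<n. q y b 0 0 z + q y b 1 0 z) else 0)"
  unfolding obs_def sum2 by (simp add: dsumA)
lemma obs1z: "z \<noteq> 0 \<Longrightarrow> obs n q y 1 z = (if y < n then (\<Sum>a<n. q a y 0 1 z + q a y 1 1 z) else 0)"
  unfolding obs_def sum2 by (simp add: dsumB)

definition swq :: "(nat \<Rightarrow> nat \<Rightarrow> nat \<Rightarrow> nat \<Rightarrow> nat \<Rightarrow> real) \<Rightarrow> nat \<Rightarrow> nat \<Rightarrow> nat \<Rightarrow> nat \<Rightarrow> nat \<Rightarrow> real" where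
  "swq q a b c d z = (if c < 2 \<and> d < 2 then q b a (1 - c) (1 - d) z else 0)"

lemma swq_simps: "swq q a b 0 0 z = q b a 1 1 z" "swq q a b 0 1 z = q b a 1 0 z"
  "swq q a b 1 0 z = q b a 0 1 z" "swq q a b 1 1 z = q b a 0 0 z"
  unfolding swq_def by simp_all

lemma sum4_swap: "(\<Sum>a<n. \<Sum>b<(n::nat). \<Sum>c<2. \<Sum>d<2. swq q a b c d z) = (\<Sum>a<n. \<Sum>b<n. \<Sum>c<2. \<Sum>d<2. q a b c d z)"
proof -
  have "(\<Sum>a<n. \<Sum>b<n. \<Sum>c<2. \<Sum>d<2. swq q a b c d z) = (\<Sum>a<n. \<Sum>b<n. q b a 1 1 z + q b a 1 0 z + (q b a 0 1 z + q b a 0 0 z))"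
    unfolding sum2 swq_simps ..
  also have "\<dots> = (\<Sum>b<n. \<Sum>a<n. q b a 1 1 z + q b a 1 0 z + (q b a 0 1 z + q b a 0 0 z))" by (rule sum.swap)
  also have "\<dots> = (\<Sum>a<n. \<Sum>b<n. \<Sum>c<2. \<Sum>d<2. q a b c d z)" unfolding sum2 by (simp add: algebra_simps)
  finally show ?thesis .
qed

lemma pZ_swq: "pZ n (swq q) = pZ n q"
  unfolding pZ_def[abs_def] using sum4_swap by (intro ext) simp

lemma IV_swq: assumes q: "IV_law n q" shows "IV_law n (swq q)"
  unfolding IV_law_def full_law_def rand_assign_def
proof (intro conjI allI impI)
  fix a b c d z
  show "0 \<le> swq q a b c d z" unfolding swq_def using IV_nonneg[OF q] by simp
  show "\<not> (a < n \<and> b < n \<and> c < 2 \<and> d < 2 \<and> z < 2) \<Longrightarrow> swq q a b c d z = 0"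
    unfolding swq_def using IV_zero[OF q] by auto
  show "swq q a b c d z = (\<Sum>z<2. swq q a b c d z) * pZ n (swq q) z"
  proof (cases "c < 2 \<and> d < 2")
    case True
    have ra: "q b a (1 - c) (1 - d) z = (\<Sum>z'<2. q b a (1 - c) (1 - d) z') * pZ n q z"
      using q unfolding IV_law_def rand_assign_def by blast
    show ?thesis unfolding pZ_swq swq_def using True ra by simp
  next
    case False
    then have h: "\<And>z'. swq q a b c d z' = 0" unfolding swq_def by auto
    show ?thesis by (simp only: h) simp
  qed
next
  have "(\<Sum>a<n. \<Sum>b<n. \<Sum>c<2. \<Sum>d<2. \<Sum>z<2. swq q a b c d z) = (\<Sum>z<2. \<Sum>a<n. \<Sum>b<n. \<Sum>c<2. \<Sum>d<2. swq q a b c d z)"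
    unfolding sum2 by (simp add: sum.distrib)
  also have "\<dots> = (\<Sum>z<2. \<Sum>a<n. \<Sum>b<n. \<Sum>c<2. \<Sum>d<2. q a b c d z)" unfolding sum4_swap ..
  also have "\<dots> = (\<Sum>a<n. \<Sum>b<n. \<Sum>c<2. \<Sum>d<2. \<Sum>z<2. q a b c d z)"
    unfolding sum2 by (simp add: sum.distrib)
  also have "\<dots> = 1" by (rule IV_sum[OF q])
  finally show "(\<Sum>a<n. \<Sum>b<n. \<Sum>c<2. \<Sum>d<2. \<Sum>z<2. swq q a b c d z) = 1" .
qed

lemma ATE_swq: "ATE n \<gamma> (swq q) = - ATE n \<gamma> q"
proof -
  have "ATE n \<gamma> (swq q) = (\<Sum>a<n. \<Sum>b<n. (\<Sum>z<2. q b a 1 1 z + q b a 1 0 z + q b a 0 1 z + q b a 0 0 z) * (\<gamma> b - \<gamma> a))"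
    unfolding ATE_def sum2 swq_simps by (simp add: algebra_simps)
  also have "\<dots> = (\<Sum>b<n. \<Sum>a<n. (\<Sum>z<2. q b a 1 1 z + q b a 1 0 z + q b a 0 1 z + q b a 0 0 z) * (\<gamma> b - \<gamma> a))"
    by (rule sum.swap)
  also have "\<dots> = - ATE n \<gamma> q"
    unfolding ATE_def sum2 by (simp add: algebra_simps sum_negf[symmetric])
  finally show ?thesis .
qed

lemma obs_swq: "obs n (swq q) y dd z = (if dd < 2 then obs n q y (1 - dd) z else 0)"
proof -
  consider "dd = 0 \<and> z = 0" | "dd = 0 \<and> z \<noteq> 0" | "dd = 1 \<and> z = 0" | "dd = 1 \<and> z \<noteq> 0" | "2 \<le> dd" by linarith
  then show ?thesis
  proof cases
    case 1
    have "obs n (swq q) y 0 0 = obs n q y 1 0"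
      unfolding obs00 obs10 swq_simps by (simp add: add.commute)
    then show ?thesis using 1 by simp
  next
    case 2
    have "obs n (swq q) y 0 z = obs n q y 1 z"
      unfolding obs0z[OF conjunct2[OF 2]] obs1z[OF conjunct2[OF 2]] swq_simps by (simp add: add.commute)
    then show ?thesis using 2 by simp
  next
    case 3
    have "obs n (swq q) y 1 0 = obs n q y 0 0"
      unfolding obs00 obs10 swq_simps by (simp add: add.commute)
    then show ?thesis using 3 by simp
  next
    case 4
    have "obs n (swq q) y 1 z = obs n q y 0 z"
      unfolding obs0z[OF conjunct2[OF 4]] obs1z[OF conjunct2[OF 4]] swq_simps by (simp add: add.commute)
    then show ?thesis using 4 by simp
  next
    case 5 then show ?thesis by (simp add: obs2)
  qed
qed

lemma swq_swq: "IV_law n q \<Longrightarrow> swq (swq q) = q"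
  unfolding swq_def by (intro ext) (auto simp: IV_zero)

lemma lower_swq: "lower_bd \<gamma> n (swq q) = - upper_bd \<gamma> n q"
proof -
  have "ip n v (pvec n (swq q)) = ip n v (pbar n q)" for v
    unfolding ip_def pvec_def pbar_def obs_swq pZ_swq by (intro sum.cong refl) simp
  then show ?thesis unfolding lower_bd_def upper_bd_def by simp
qed



theorem theorem2:
  fixes n :: nat and \<gamma> :: "nat \<Rightarrow> real"
  assumes "strict_mono_on {..<n} \<gamma>"
  shows "(\<forall>q. IV_law n q \<and> (\<forall>z<2. 0 < pZ n q z) \<longrightarrow>
            lower_bd \<gamma> n q \<le> ATE n \<gamma> q \<and> ATE n \<gamma> q \<le> upper_bd \<gamma> n q) \<and>
         (\<forall>q. IV_law n q \<and> (\<forall>z<2. 0 < pZ n q z) \<longrightarrow>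
            (\<exists>q1. IV_law n q1 \<and> obs n q1 = obs n q \<and> ATE n \<gamma> q1 = lower_bd \<gamma> n q) \<and>
            (\<exists>q2. IV_law n q2 \<and> obs n q2 = obs n q \<and> ATE n \<gamma> q2 = upper_bd \<gamma> n q))"
proof (intro conjI allI impI)
  fix q assume h: "IV_law n q \<and> (\<forall>z<2. 0 < pZ n q z)"
  then have q: "IV_law n q" and pz: "\<forall>z<2. 0 < pZ n q z" by auto
  have qs: "IV_law n (swq q)" by (rule IV_swq[OF q])
  have pzs: "\<forall>z<2. 0 < pZ n (swq q) z" using pz unfolding pZ_swq .
  show "lower_bd \<gamma> n q \<le> ATE n \<gamma> q" by (rule lower_le[OF assms q pz])
  show "ATE n \<gamma> q \<le> upper_bd \<gamma> n q"
    using lower_le[OF assms qs pzs] unfolding lower_swq ATE_swq by simp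
next
  fix q assume h: "IV_law n q \<and> (\<forall>z<2. 0 < pZ n q z)"
  then have q: "IV_law n q" and pz: "\<forall>z<2. 0 < pZ n q z" by auto
  show "\<exists>q1. IV_law n q1 \<and> obs n q1 = obs n q \<and> ATE n \<gamma> q1 = lower_bd \<gamma> n q"
    by (rule lower_sharp[OF assms q pz])
next
  fix q assume h: "IV_law n q \<and> (\<forall>z<2. 0 < pZ n q z)"
  then have q: "IV_law n q" and pz: "\<forall>z<2. 0 < pZ n q z" by auto
  have qs: "IV_law n (swq q)" by (rule IV_swq[OF q])
  have pzs: "\<forall>z<2. 0 < pZ n (swq q) z" using pz unfolding pZ_swq .
  obtain q1 where q1: "IV_law n q1" "obs n q1 = obs n (swq q)" "ATE n \<gamma> q1 = lower_bd \<gamma> n (swq q)"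
    using lower_sharp[OF assms qs pzs] by blast
  have o: "obs n (swq q1) = obs n q"
  proof (intro ext)
    fix y dd z
    show "obs n (swq q1) y dd z = obs n q y dd z"
    proof (cases "dd < 2")
      case True
      then have "1 - (1 - dd) = dd" "1 - dd < 2" by auto
      then show ?thesis using True unfolding obs_swq q1(2) obs_swq by simp
    next
      case False
      then show ?thesis unfolding obs_swq by (simp add: obs2)
    qed
  qed
  show "\<exists>q2. IV_law n q2 \<and> obs n q2 = obs n q \<and> ATE n \<gamma> q2 = upper_bd \<gamma> n q"
    using IV_swq[OF q1(1)] o q1(3) unfolding lower_swq by (intro exI[of _ "swq q1"]) (simp add: ATE_swq)
qed

end
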